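(* Every typed term is strongly normalizable: if $\Gamma \vdash t : A \,;\, \Delta$ is derivable in the type system described in the context, then there is no infinite sequence $(t_i)_{i<\omega}$ with $t_0 = t$ and $t_i \triangleright t_{i+1}$ for all $i$.
   Context: Types are built from propositional variables and the constant $\perp$ using $\to$, $\wedge$, $\vee$. There are two disjoint infinite sets of variables: $\lambda$-variables $x,y,\dots$ and $\mu$-variables $a,b,\dots$. Terms $\mathcal{T}$ and $\mathcal{E}$-terms $\mathcal{E}$ are given by $\mathcal{T} ::= x \mid \lambda x.\mathcal{T} \mid (\mathcal{T}\;\mathcal{E}) \mid \langle \mathcal{T},\mathcal{T}\rangle \mid \omega_1\mathcal{T} \mid \omega_2\mathcal{T} \mid \mu a.\mathcal{T} \mid (a\;\mathcal{T})$, $\mathcal{E} ::= \mathcal{T} \mid \pi_1 \mid \pi_2 \mid [x.\mathcal{T}, y.\mathcal{T}]$ ($\lambda x$ binds $x$, $\mu a$ binds $a$, and in $[x.u,y.v]$ $x$ is bound in $u$ and $y$ in $v$; terms are taken up to renaming of bound variables). Contexts $\Gamma$ (resp. $\Delta$) are sets of declarations $x:A$ (resp. $a:A$). Typing rules for judgments $\Gamma \vdash t : A \,;\, \Delta$: (ax) $\Gamma, x:A \vdash x:A;\Delta$; ($\to_i$) from $\Gamma,x:A\vdash t:B;\Delta$ infer $\Gamma\vdash \lambda x.t : A\to B;\Delta$; ($\to_e$) from $\Gamma\vdash u:A\to B;\Delta$ and $\Gamma\vdash v:A;\Delta$ infer $\Gamma\vdash (u\;v):B;\Delta$; ($\wedge_i$)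 from $\Gamma\vdash u:A;\Delta$ and $\Gamma\vdash v:B;\Delta$ infer $\Gamma\vdash\langle u,v\rangle : A\wedge B;\Delta$; ($\wedge_e^1$, $\wedge_e^2$) from $\Gamma\vdash t:A\wedge B;\Delta$ infer $\Gamma\vdash (t\;\pi_1):A;\Delta$ and $\Gamma\vdash (t\;\pi_2):B;\Delta$; ($\vee_i^1$, $\vee_i^2$) from $\Gamma\vdash t:A;\Delta$ infer $\Gamma\vdash\omega_1 t : A\vee B;\Delta$; from $\Gamma\vdash t:B;\Delta$ infer $\Gamma\vdash \omega_2 t:A\vee B;\Delta$; ($\vee_e$) from $\Gamma\vdash t:A\vee B;\Delta$, $\Gamma,x:A\vdash u:C;\Delta$, $\Gamma,y:B\vdash v:C;\Delta$ infer $\Gamma\vdash (t\;[x.u,y.v]):C;\Delta$; ($abs_i$) from $\Gamma\vdash t:A;\Delta,a:A$ infer $\Gamma\vdash (a\;t):\perp;\Delta,a:A$; ($abs_e$) from $\Gamma\vdash t:\perp;\Delta,a:A$ infer $\Gamma\vdash \mu a.t : A;\Delta$. A term is typed if $\Gamma\vdash t:A;\Delta$ is derivable for some $\Gamma,A,\Delta$. The one-step reduction $\triangleright$ on $\mathcal{E}$-terms is the closure under all term constructors of the rules: $(\lambda x.u\;v)\triangleright u[x:=v]$; $(\langle t_1,t_2\rangle\;\pi_i)\triangleright t_i$; $(\omega_i t\;[x_1.u_1,x_2.u_2])\triangleright u_i[x_i:=t]$; $((t\;[x_1.u_1,x_2.u_2])\;\varepsilon)\triangleright (t\;[x_1.(u_1\;\varepsilon),x_2.(u_2\;\varepsilon)])$;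 $(\mu a.t\;\varepsilon)\triangleright \mu a.t[a:=^*\varepsilon]$, where $\varepsilon$ is any $\mathcal{E}$-term and $t[a:=^*\varepsilon]$ is obtained from $t$ by replacing inductively each subterm of the form $(a\;v)$ by $(a\;(v\;\varepsilon))$. *)

theory Defs
  imports Main
begin

datatype ty = TVar nat | Bot | Imp ty ty | Conj ty ty | Disj ty ty

text \<open>Lambda-variables and mu-variables are represented by de Bruijn indices in two
  independent index spaces, so terms are identified up to renaming of bound variables.
  LVar i: lambda-variable; Lam binds a lambda-variable; Mu binds a mu-variable;
  MApp a t is (a t); Case u v is [x.u, y.v] and binds one lambda-variable in each branch;
  Inj1/Inj2 are omega_1/omega_2.\<close>

datatype trm =
    LVar nat
  | Lam trm
  | App trm elim
  | Pair trm trm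
  | Inj1 trm
  | Inj2 trm
  | Mu trm
  | MApp nat trm
and elim =
    ETm trm
  | Proj1
  | Proj2
  | Case trm trm

primrec lift_l :: "nat \<Rightarrow> trm \<Rightarrow> trm"
  and lift_lE :: "nat \<Rightarrow> elim \<Rightarrow> elim" where
  "lift_l k (LVar i) = (if i < k then LVar i else LVar (Suc i))"
| "lift_l k (Lam t) = Lam (lift_l (Suc k) t)"
| "lift_l k (App t e) = App (lift_l k t) (lift_lE k e)"
| "lift_l k (Pair t u) = Pair (lift_l k t) (lift_l k u)"
| "lift_l k (Inj1 t) = Inj1 (lift_l k t)"
| "lift_l k (Inj2 t) = Inj2 (lift_l k t)"
| "lift_l k (Mu t) = Mu (lift_l k t)"
| "lift_l k (MApp a t) = MApp a (lift_l k t)"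
| "lift_lE k (ETm t) = ETm (lift_l k t)"
| "lift_lE k Proj1 = Proj1"
| "lift_lE k Proj2 = Proj2"
| "lift_lE k (Case u v) = Case (lift_l (Suc k) u) (lift_l (Suc k) v)"

primrec lift_m :: "nat \<Rightarrow> trm \<Rightarrow> trm"
  and lift_mE :: "nat \<Rightarrow> elim \<Rightarrow> elim" where
  "lift_m k (LVar i) = LVar i"
| "lift_m k (Lam t) = Lam (lift_m k t)"
| "lift_m k (App t e) = App (lift_m k t) (lift_mE k e)"
| "lift_m k (Pair t u) = Pair (lift_m k t) (lift_m k u)"
| "lift_m k (Inj1 t) = Inj1 (lift_m k t)"
| "lift_m k (Inj2 t) = Inj2 (lift_m k t)"
| "lift_m k (Mu t) = Mu (lift_m (Suc k) t)"
| "lift_m k (MApp a t) = MApp (if a < k then a else Suc a) (lift_m k t)"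
| "lift_mE k (ETm t) = ETm (lift_m k t)"
| "lift_mE k Proj1 = Proj1"
| "lift_mE k Proj2 = Proj2"
| "lift_mE k (Case u v) = Case (lift_m k u) (lift_m k v)"

primrec subst :: "trm \<Rightarrow> nat \<Rightarrow> trm \<Rightarrow> trm"
  and substE :: "elim \<Rightarrow> nat \<Rightarrow> trm \<Rightarrow> elim" where
  "subst (LVar i) k v = (if i < k then LVar i else if i = k then v else LVar (i - 1))"
| "subst (Lam t) k v = Lam (subst t (Suc k) (lift_l 0 v))"
| "subst (App t e) k v = App (subst t k v) (substE e k v)"
| "subst (Pair t u) k v = Pair (subst t k v) (subst u k v)"
| "subst (Inj1 t) k v = Inj1 (subst t k v)"
| "subst (Inj2 t) k v = Inj2 (subst t k v)"
| "subst (Mu t) k v = Mu (subst t k (lift_m 0 v))"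
| "subst (MApp a t) k v = MApp a (subst t k v)"
| "substE (ETm t) k v = ETm (subst t k v)"
| "substE Proj1 k v = Proj1"
| "substE Proj2 k v = Proj2"
| "substE (Case u w) k v = Case (subst u (Suc k) (lift_l 0 v)) (subst w (Suc k) (lift_l 0 v))"

primrec msubst :: "trm \<Rightarrow> nat \<Rightarrow> elim \<Rightarrow> trm"
  and msubstE :: "elim \<Rightarrow> nat \<Rightarrow> elim \<Rightarrow> elim" where
  "msubst (LVar i) a e = LVar i"
| "msubst (Lam t) a e = Lam (msubst t a (lift_lE 0 e))"
| "msubst (App t f) a e = App (msubst t a e) (msubstE f a e)"
| "msubst (Pair t u) a e = Pair (msubst t a e) (msubst u a e)"
| "msubst (Inj1 t) a e = Inj1 (msubst t a e)"
| "msubst (Inj2 t) a e = Inj2 (msubst t a e)"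
| "msubst (Mu t) a e = Mu (msubst t (Suc a) (lift_mE 0 e))"
| "msubst (MApp b t) a e =
     (if b = a then MApp b (App (msubst t a e) e) else MApp b (msubst t a e))"
| "msubstE (ETm t) a e = ETm (msubst t a e)"
| "msubstE Proj1 a e = Proj1"
| "msubstE Proj2 a e = Proj2"
| "msubstE (Case u w) a e = Case (msubst u a (lift_lE 0 e)) (msubst w a (lift_lE 0 e))"

text \<open>Contexts are total maps from de Bruijn indices to types; extending a context
  by a declaration of the newly bound variable (index 0) shifts the rest.\<close>

definition ext_ctx :: "ty \<Rightarrow> (nat \<Rightarrow> ty) \<Rightarrow> (nat \<Rightarrow> ty)" where
  "ext_ctx A \<Gamma> = (\<lambda>i. case i of 0 \<Rightarrow> A | Suc j \<Rightarrow> \<Gamma> j)"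

inductive typing :: "(nat \<Rightarrow> ty) \<Rightarrow> trm \<Rightarrow> ty \<Rightarrow> (nat \<Rightarrow> ty) \<Rightarrow> bool" where
  ax: "\<Gamma> x = A \<Longrightarrow> typing \<Gamma> (LVar x) A \<Delta>"
| imp_i: "typing (ext_ctx A \<Gamma>) t B \<Delta> \<Longrightarrow> typing \<Gamma> (Lam t) (Imp A B) \<Delta>"
| imp_e: "typing \<Gamma> u (Imp A B) \<Delta> \<Longrightarrow> typing \<Gamma> v A \<Delta> \<Longrightarrow> typing \<Gamma> (App u (ETm v)) B \<Delta>"
| conj_i: "typing \<Gamma> u A \<Delta> \<Longrightarrow> typing \<Gamma> v B \<Delta> \<Longrightarrow> typing \<Gamma> (Pair u v) (Conj A B) \<Delta>"
| conj_e1: "typing \<Gamma> t (Conj A B) \<Delta> \<Longrightarrow> typing \<Gamma> (App t Proj1) A \<Delta>"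
| conj_e2: "typing \<Gamma> t (Conj A B) \<Delta> \<Longrightarrow> typing \<Gamma> (App t Proj2) B \<Delta>"
| disj_i1: "typing \<Gamma> t A \<Delta> \<Longrightarrow> typing \<Gamma> (Inj1 t) (Disj A B) \<Delta>"
| disj_i2: "typing \<Gamma> t B \<Delta> \<Longrightarrow> typing \<Gamma> (Inj2 t) (Disj A B) \<Delta>"
| disj_e: "typing \<Gamma> t (Disj A B) \<Delta> \<Longrightarrow> typing (ext_ctx A \<Gamma>) u C \<Delta> \<Longrightarrow>
           typing (ext_ctx B \<Gamma>) v C \<Delta> \<Longrightarrow> typing \<Gamma> (App t (Case u v)) C \<Delta>"
| abs_i: "typing \<Gamma> t A \<Delta> \<Longrightarrow> \<Delta> a = A \<Longrightarrow> typing \<Gamma> (MApp a t) Bot \<Delta>"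
| abs_e: "typing \<Gamma> t Bot (ext_ctx A \<Delta>) \<Longrightarrow> typing \<Gamma> (Mu t) A \<Delta>"

inductive red :: "trm \<Rightarrow> trm \<Rightarrow> bool"
  and redE :: "elim \<Rightarrow> elim \<Rightarrow> bool" where
  beta: "red (App (Lam u) (ETm v)) (subst u 0 v)"
| proj1: "red (App (Pair t1 t2) Proj1) t1"
| proj2: "red (App (Pair t1 t2) Proj2) t2"
| case1: "red (App (Inj1 t) (Case u1 u2)) (subst u1 0 t)"
| case2: "red (App (Inj2 t) (Case u1 u2)) (subst u2 0 t)"
| comm: "red (App (App t (Case u1 u2)) e)
             (App t (Case (App u1 (lift_lE 0 e)) (App u2 (lift_lE 0 e))))"
| mu: "red (App (Mu t) e) (Mu (msubst t 0 (lift_mE 0 e)))"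
| c_lam: "red t t' \<Longrightarrow> red (Lam t) (Lam t')"
| c_app1: "red t t' \<Longrightarrow> red (App t e) (App t' e)"
| c_app2: "redE e e' \<Longrightarrow> red (App t e) (App t e')"
| c_pair1: "red t t' \<Longrightarrow> red (Pair t u) (Pair t' u)"
| c_pair2: "red u u' \<Longrightarrow> red (Pair t u) (Pair t u')"
| c_inj1: "red t t' \<Longrightarrow> red (Inj1 t) (Inj1 t')"
| c_inj2: "red t t' \<Longrightarrow> red (Inj2 t) (Inj2 t')"
| c_mu: "red t t' \<Longrightarrow> red (Mu t) (Mu t')"
| c_mapp: "red t t' \<Longrightarrow> red (MApp a t) (MApp a t')"
| c_etm: "red t t' \<Longrightarrow> redE (ETm t) (ETm t')"
| c_case1: "red u u' \<Longrightarrow> redE (Case u v) (Case u' v)"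
| c_case2: "red v v' \<Longrightarrow> redE (Case u v) (Case u v')"

end

theory Submission
  imports Defs
begin

lemma lift_l_lift_l:
  fixes t :: trm and e :: elim
  shows "\<And>i j. i \<le> j \<Longrightarrow> lift_l i (lift_l j t) = lift_l (Suc j) (lift_l i t)"
    and "\<And>i j. i \<le> j \<Longrightarrow> lift_lE i (lift_lE j e) = lift_lE (Suc j) (lift_lE i e)"
  by (induct t and e) auto

lemma lift_m_lift_m:
  fixes t :: trm and e :: elim
  shows "\<And>i j. i \<le> j \<Longrightarrow> lift_m i (lift_m j t) = lift_m (Suc j) (lift_m i t)"
    and "\<And>i j. i \<le> j \<Longrightarrow> lift_mE i (lift_mE j e) = lift_mE (Suc j) (lift_mE i e)"
  by (induct t and e) auto

lemma lift_l_lift_m: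
  fixes t :: trm and e :: elim
  shows "\<And>i j. lift_l i (lift_m j t) = lift_m j (lift_l i t)"
    and "\<And>i j. lift_lE i (lift_mE j e) = lift_mE j (lift_lE i e)"
  by (induct t and e) auto

lemma subst_lift_l:
  fixes t :: trm and e :: elim
  shows "\<And>k s. subst (lift_l k t) k s = t"
    and "\<And>k s. substE (lift_lE k e) k s = e"
  by (induct t and e) auto

lemma lift_subst:
  fixes t :: trm and e :: elim
  shows "\<And>i j s. j < Suc i \<Longrightarrow> lift_l i (subst t j s) = subst (lift_l (Suc i) t) j (lift_l i s)"
    and "\<And>i j s. j < Suc i \<Longrightarrow> lift_lE i (substE e j s) = substE (lift_lE (Suc i) e) j (lift_l i s)"
  by (induct t and e) (auto simp: lift_l_lift_l lift_l_lift_m)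

lemma lift_subst_lt:
  fixes t :: trm and e :: elim
  shows "\<And>i j s. i < Suc j \<Longrightarrow> lift_l i (subst t j s) = subst (lift_l i t) (Suc j) (lift_l i s)"
    and "\<And>i j s. i < Suc j \<Longrightarrow> lift_lE i (substE e j s) = substE (lift_lE i e) (Suc j) (lift_l i s)"
  by (induct t and e) (auto simp: lift_l_lift_l lift_l_lift_m)

lemma lift_m_subst:
  fixes t :: trm and e :: elim
  shows "\<And>k j s. lift_m k (subst t j s) = subst (lift_m k t) j (lift_m k s)"
    and "\<And>k j s. lift_mE k (substE e j s) = substE (lift_mE k e) j (lift_m k s)"
  by (induct t and e) (auto simp: lift_m_lift_m lift_l_lift_m)

lemma subst_subst:
  fixes t :: trm and e :: elim
  shows "\<And>i j u v. i < Suc j \<Longrightarrow> subst (subst t (Suc j) (lift_l i v)) i (subst u j v) = subst (subst t i u) j v"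
    and "\<And>i j u v. i < Suc j \<Longrightarrow> substE (substE e (Suc j) (lift_l i v)) i (subst u j v) = substE (substE e i u) j v"
  by (induct t and e) (auto simp: lift_l_lift_l lift_subst lift_subst_lt subst_lift_l lift_m_subst
        simp flip: lift_l_lift_m)

primrec mfree :: "nat \<Rightarrow> trm \<Rightarrow> bool"
  and mfreeE :: "nat \<Rightarrow> elim \<Rightarrow> bool" where
  "mfree a (LVar i) = True"
| "mfree a (Lam t) = mfree a t"
| "mfree a (App t e) = (mfree a t \<and> mfreeE a e)"
| "mfree a (Pair t u) = (mfree a t \<and> mfree a u)"
| "mfree a (Inj1 t) = mfree a t"
| "mfree a (Inj2 t) = mfree a t"
| "mfree a (Mu t) = mfree (Suc a) t"
| "mfree a (MApp b t) = (b \<noteq> a \<and> mfree a t)"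
| "mfreeE a (ETm t) = mfree a t"
| "mfreeE a Proj1 = True"
| "mfreeE a Proj2 = True"
| "mfreeE a (Case u v) = (mfree a u \<and> mfree a v)"

lemma msubst_mfree:
  fixes t :: trm and e :: elim
  shows "\<And>a f. mfree a t \<Longrightarrow> msubst t a f = t"
    and "\<And>a f. mfreeE a e \<Longrightarrow> msubstE e a f = e"
  by (induct t and e) auto

lemma mfree_lift_m:
  fixes t :: trm and e :: elim
  shows "\<And>k. mfree k (lift_m k t)"
    and "\<And>k. mfreeE k (lift_mE k e)"
  by (induct t and e) auto

lemma mfree_lift_m2:
  fixes t :: trm and e :: elim
  shows "\<And>a k. mfree a t \<Longrightarrow> k \<le> a \<Longrightarrow> mfree (Suc a) (lift_m k t)"
    and "\<And>a k. mfreeE a e \<Longrightarrow> k \<le> a \<Longrightarrow> mfreeE (Suc a) (lift_mE k e)"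
  by (induct t and e) auto

lemma mfree_lift_m3:
  fixes t :: trm and e :: elim
  shows "\<And>a k. mfree a t \<Longrightarrow> a < k \<Longrightarrow> mfree a (lift_m k t)"
    and "\<And>a k. mfreeE a e \<Longrightarrow> a < k \<Longrightarrow> mfreeE a (lift_mE k e)"
  by (induct t and e) auto

lemma mfree_lift_m0: "mfree a t \<Longrightarrow> mfree (Suc a) (lift_m 0 t)"
  "mfreeE a e \<Longrightarrow> mfreeE (Suc a) (lift_mE 0 e)"
  by (auto simp: mfree_lift_m2)

lemma mfree_lift_l:
  fixes t :: trm and e :: elim
  shows "\<And>a k. mfree a t \<Longrightarrow> mfree a (lift_l k t)"
    and "\<And>a k. mfreeE a e \<Longrightarrow> mfreeE a (lift_lE k e)"
  by (induct t and e) auto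

lemma mfree_subst:
  fixes t :: trm and e :: elim
  shows "\<And>a k s. mfree a t \<Longrightarrow> mfree a s \<Longrightarrow> mfree a (subst t k s)"
    and "\<And>a k s. mfreeE a e \<Longrightarrow> mfree a s \<Longrightarrow> mfreeE a (substE e k s)"
  by (induct t and e) (auto simp: mfree_lift_l mfree_lift_m0)

lemma lift_l_msubst:
  fixes t :: trm and e :: elim
  shows "\<And>k a f. lift_l k (msubst t a f) = msubst (lift_l k t) a (lift_lE k f)"
    and "\<And>k a f. lift_lE k (msubstE e a f) = msubstE (lift_lE k e) a (lift_lE k f)"
  by (induct t and e) (auto simp: lift_l_lift_l lift_l_lift_m)

lemma lift_m_msubst:
  fixes t :: trm and e :: elim
  shows "\<And>k a f. lift_m k (msubst t a f) = msubst (lift_m k t) (if a < k then a else Suc a) (lift_mE k f)"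
    and "\<And>k a f. lift_mE k (msubstE e a f) = msubstE (lift_mE k e) (if a < k then a else Suc a) (lift_mE k f)"
  by (induct t and e) (auto simp: lift_m_lift_m lift_l_lift_m)

lemma lift_m0_msubst: "lift_m 0 (msubst t a f) = msubst (lift_m 0 t) (Suc a) (lift_mE 0 f)"
  "lift_mE 0 (msubstE e a f) = msubstE (lift_mE 0 e) (Suc a) (lift_mE 0 f)"
  using lift_m_msubst[of 0] by auto

lemma subst_msubst:
  fixes t :: trm and e :: elim
  shows "\<And>a f k w. mfree a w \<Longrightarrow> subst (msubst t a f) k w = msubst (subst t k w) a (substE f k w)"
    and "\<And>a f k w. mfree a w \<Longrightarrow> substE (msubstE e a f) k w = msubstE (substE e k w) a (substE f k w)"
  by (induct t and e) (auto simp: msubst_mfree mfree_lift_l mfree_lift_m0 lift_subst_lt lift_m_subst)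

lemma msubst_subst:
  fixes t :: trm and e :: elim
  shows "\<And>a f k v. msubst (subst t k v) a f = subst (msubst t a (lift_lE k f)) k (msubst v a f)"
    and "\<And>a f k v. msubstE (substE e k v) a f = substE (msubstE e a (lift_lE k f)) k (msubst v a f)"
  by (induct t and e) (auto simp: lift_l_msubst lift_m0_msubst lift_l_lift_l lift_l_lift_m subst_lift_l)

lemma msubst_msubst:
  fixes t :: trm and e :: elim
  shows "\<And>b c F G. b \<noteq> c \<Longrightarrow> mfreeE b G \<Longrightarrow>
      msubst (msubst t b F) c G = msubst (msubst t c G) b (msubstE F c G)"
    and "\<And>b c F G. b \<noteq> c \<Longrightarrow> mfreeE b G \<Longrightarrow>
      msubstE (msubstE e b F) c G = msubstE (msubstE e c G) b (msubstE F c G)"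
  by (induct t and e) (auto simp: msubst_mfree mfree_lift_l mfree_lift_m0 lift_l_msubst lift_m0_msubst)

abbreviation reds where "reds \<equiv> red\<^sup>*\<^sup>*"
abbreviation redsE where "redsE \<equiv> redE\<^sup>*\<^sup>*"

lemma rtc_map: "r\<^sup>*\<^sup>* x y \<Longrightarrow> (\<And>x y. r x y \<Longrightarrow> s (f x) (f y)) \<Longrightarrow> s\<^sup>*\<^sup>* (f x) (f y)"
  by (induct rule: rtranclp_induct) (auto intro: rtranclp.rtrancl_into_rtrancl)

lemma red_lift_l:
  shows "red t t' \<Longrightarrow> red (lift_l k t) (lift_l k t')"
    and "redE e e' \<Longrightarrow> redE (lift_lE k e) (lift_lE k e')"
proof (induct arbitrary: k and k rule: red_redE.inducts)
  case (beta u v)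
  then show ?case using red_redE.beta[of "lift_l (Suc k) u" "lift_l k v"] by (simp add: lift_subst)
next
  case (case1 t u1 u2)
  then show ?case using red_redE.case1[of "lift_l k t" "lift_l (Suc k) u1" "lift_l (Suc k) u2"] by (simp add: lift_subst)
next
  case (case2 t u1 u2)
  then show ?case using red_redE.case2[of "lift_l k t" "lift_l (Suc k) u1" "lift_l (Suc k) u2"] by (simp add: lift_subst)
next
  case (comm t u1 u2 e)
  then show ?case using red_redE.comm[of "lift_l k t" "lift_l (Suc k) u1" "lift_l (Suc k) u2" "lift_lE k e"]
    by (simp add: lift_l_lift_l)
next
  case (mu t e)
  then show ?case using red_redE.mu[of "lift_l k t" "lift_lE k e"]
    by (simp add: lift_l_msubst lift_l_lift_m)
qed (auto intro: red_redE.intros)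

lemma red_lift_m:
  shows "red t t' \<Longrightarrow> red (lift_m k t) (lift_m k t')"
    and "redE e e' \<Longrightarrow> redE (lift_mE k e) (lift_mE k e')"
proof (induct arbitrary: k and k rule: red_redE.inducts)
  case (beta u v)
  then show ?case using red_redE.beta[of "lift_m k u" "lift_m k v"] by (simp add: lift_m_subst)
next
  case (case1 t u1 u2)
  then show ?case using red_redE.case1[of "lift_m k t" "lift_m k u1" "lift_m k u2"] by (simp add: lift_m_subst)
next
  case (case2 t u1 u2)
  then show ?case using red_redE.case2[of "lift_m k t" "lift_m k u1" "lift_m k u2"] by (simp add: lift_m_subst)
next
  case (comm t u1 u2 e)
  then show ?case using red_redE.comm[of "lift_m k t" "lift_m k u1" "lift_m k u2" "lift_mE k e"]
    by (simp add: lift_l_lift_m)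
next
  case (mu t e)
  then show ?case using red_redE.mu[of "lift_m (Suc k) t" "lift_mE k e"]
    by (simp add: lift_m_msubst lift_m_lift_m)
qed (auto intro: red_redE.intros)

lemma red_subst:
  shows "red t t' \<Longrightarrow> red (subst t k w) (subst t' k w)"
    and "redE e e' \<Longrightarrow> redE (substE e k w) (substE e' k w)"
proof (induct arbitrary: k w and k w rule: red_redE.inducts)
  case (beta u v)
  then show ?case using red_redE.beta[of "subst u (Suc k) (lift_l 0 w)" "subst v k w"] by (simp add: subst_subst[symmetric])
next
  case (case1 t u1 u2)
  then show ?case using red_redE.case1[of "subst t k w" "subst u1 (Suc k) (lift_l 0 w)" "subst u2 (Suc k) (lift_l 0 w)"]
    by (simp add: subst_subst[symmetric])
next
  case (case2 t u1 u2)
  then show ?case using red_redE.case2[of "subst t k w" "subst u1 (Suc k) (lift_l 0 w)" "subst u2 (Suc k) (lift_l 0 w)"]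
    by (simp add: subst_subst[symmetric])
next
  case (comm t u1 u2 e)
  then show ?case using red_redE.comm[of "subst t k w" "subst u1 (Suc k) (lift_l 0 w)" "subst u2 (Suc k) (lift_l 0 w)" "substE e k w"]
    by (simp add: lift_subst_lt)
next
  case (mu t e)
  then show ?case using red_redE.mu[of "subst t k (lift_m 0 w)" "substE e k w"]
    by (simp add: subst_msubst mfree_lift_m lift_m_subst)
qed (auto intro: red_redE.intros)

lemma red_msubst:
  shows "red t t' \<Longrightarrow> red (msubst t a f) (msubst t' a f)"
    and "redE e e' \<Longrightarrow> redE (msubstE e a f) (msubstE e' a f)"
proof (induct arbitrary: a f and a f rule: red_redE.inducts)
  case (beta u v)
  then show ?case using red_redE.beta[of "msubst u a (lift_lE 0 f)" "msubst v a f"] by (simp add: msubst_subst)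
next
  case (case1 t u1 u2)
  then show ?case using red_redE.case1[of "msubst t a f" "msubst u1 a (lift_lE 0 f)" "msubst u2 a (lift_lE 0 f)"]
    by (simp add: msubst_subst)
next
  case (case2 t u1 u2)
  then show ?case using red_redE.case2[of "msubst t a f" "msubst u1 a (lift_lE 0 f)" "msubst u2 a (lift_lE 0 f)"]
    by (simp add: msubst_subst)
next
  case (comm t u1 u2 e)
  then show ?case using red_redE.comm[of "msubst t a f" "msubst u1 a (lift_lE 0 f)" "msubst u2 a (lift_lE 0 f)" "msubstE e a f"]
    by (simp add: lift_l_msubst)
next
  case (mu t e)
  then show ?case using red_redE.mu[of "msubst t (Suc a) (lift_mE 0 f)" "msubstE e a f"]
    by (simp add: msubst_msubst mfree_lift_m lift_m0_msubst)
next
  case (c_mapp t t' b)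
  then show ?case by (auto intro: red_redE.intros)
qed (auto intro: red_redE.intros)

lemma reds_Lam: "reds t t' \<Longrightarrow> reds (Lam t) (Lam t')"
  by (rule rtc_map[where r=red and s=red and f=Lam]) (auto intro: red_redE.intros)
lemma reds_App1: "reds t t' \<Longrightarrow> reds (App t e) (App t' e)"
  by (rule rtc_map[where r=red and s=red and f="\<lambda>x. App x e"]) (auto intro: red_redE.intros)
lemma reds_App2: "redsE e e' \<Longrightarrow> reds (App t e) (App t e')"
  by (rule rtc_map[where r=redE and s=red and f="\<lambda>x. App t x"]) (auto intro: red_redE.intros)
lemma reds_App: "reds t t' \<Longrightarrow> redsE e e' \<Longrightarrow> reds (App t e) (App t' e')"
  by (meson reds_App1 reds_App2 rtranclp_trans)
lemma reds_Pair: "reds t t' \<Longrightarrow> reds u u' \<Longrightarrow> reds (Pair t u) (Pair t' u')"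
proof -
  assume a: "reds t t'" "reds u u'"
  have "reds (Pair t u) (Pair t' u)" by (rule rtc_map[OF a(1), where s=red and f="\<lambda>x. Pair x u"]) (auto intro: red_redE.intros)
  moreover have "reds (Pair t' u) (Pair t' u')" by (rule rtc_map[OF a(2), where s=red and f="\<lambda>x. Pair t' x"]) (auto intro: red_redE.intros)
  ultimately show ?thesis by auto
qed
lemma reds_Inj1: "reds t t' \<Longrightarrow> reds (Inj1 t) (Inj1 t')"
  by (rule rtc_map[where r=red and s=red and f=Inj1]) (auto intro: red_redE.intros)
lemma reds_Inj2: "reds t t' \<Longrightarrow> reds (Inj2 t) (Inj2 t')"
  by (rule rtc_map[where r=red and s=red and f=Inj2]) (auto intro: red_redE.intros)
lemma reds_Mu: "reds t t' \<Longrightarrow> reds (Mu t) (Mu t')"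
  by (rule rtc_map[where r=red and s=red and f=Mu]) (auto intro: red_redE.intros)
lemma reds_MApp: "reds t t' \<Longrightarrow> reds (MApp a t) (MApp a t')"
  by (rule rtc_map[where r=red and s=red and f="MApp a"]) (auto intro: red_redE.intros)
lemma redsE_ETm: "reds t t' \<Longrightarrow> redsE (ETm t) (ETm t')"
  by (rule rtc_map[where r=red and s=redE and f=ETm]) (auto intro: red_redE.intros)
lemma redsE_Case: "reds t t' \<Longrightarrow> reds u u' \<Longrightarrow> redsE (Case t u) (Case t' u')"
proof -
  assume a: "reds t t'" "reds u u'"
  have "redsE (Case t u) (Case t' u)" by (rule rtc_map[OF a(1), where s=redE and f="\<lambda>x. Case x u"]) (auto intro: red_redE.intros)
  moreover have "redsE (Case t' u) (Case t' u')" by (rule rtc_map[OF a(2), where s=redE and f="\<lambda>x. Case t' x"]) (auto intro: red_redE.intros)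
  ultimately show ?thesis by auto
qed

lemmas reds_congs = reds_Lam reds_App reds_Pair reds_Inj1 reds_Inj2 reds_Mu reds_MApp redsE_ETm redsE_Case

lemma red_subst_arg:
  fixes t :: trm and e :: elim
  shows "\<And>k u u'. red u u' \<Longrightarrow> reds (subst t k u) (subst t k u')"
    and "\<And>k u u'. red u u' \<Longrightarrow> redsE (substE e k u) (substE e k u')"
proof (induct t and e)
  case (Lam t) then show ?case by (auto intro!: reds_congs red_lift_l)
next
  case (Mu t) then show ?case by (auto intro!: reds_congs red_lift_m)
next
  case (Case t1 t2) then show ?case
    using Case(1)[OF red_lift_l(1)[OF Case(3)]] Case(2)[OF red_lift_l(1)[OF Case(3)]] by (auto intro!: reds_congs)
qed (auto intro!: reds_congs)

lemma redE_msubst_arg: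
  fixes t :: trm and e :: elim
  shows "\<And>a f f'. redE f f' \<Longrightarrow> reds (msubst t a f) (msubst t a f')"
    and "\<And>a f f'. redE f f' \<Longrightarrow> redsE (msubstE e a f) (msubstE e a f')"
proof (induct t and e)
  case (Lam t) then show ?case by (auto intro!: reds_congs red_lift_l)
next
  case (Mu t) then show ?case by (auto intro!: reds_congs red_lift_m)
next
  case (Case t1 t2) then show ?case
    using Case(1)[OF red_lift_l(2)[OF Case(3)]] Case(2)[OF red_lift_l(2)[OF Case(3)]] by (auto intro!: reds_congs)
next
  case (MApp b t)
  have "redsE f f'" using MApp(2) by auto
  then show ?case using MApp by (auto intro!: reds_congs)
qed (auto intro!: reds_congs)

lemma msubst_comm:
  fixes t :: trm and e :: elim
  shows "\<And>a u v f. mfreeE a (Case u v) \<Longrightarrow>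
      reds (msubst (msubst t a (Case u v)) a f) (msubst t a (Case (App u (lift_lE 0 f)) (App v (lift_lE 0 f))))"
    and "\<And>a u v f. mfreeE a (Case u v) \<Longrightarrow>
      redsE (msubstE (msubstE e a (Case u v)) a f) (msubstE e a (Case (App u (lift_lE 0 f)) (App v (lift_lE 0 f))))"
proof (induct t and e)
  case (Lam t)
  show ?case using Lam(1)[of a "lift_l (Suc 0) u" "lift_l (Suc 0) v" "lift_lE 0 f"] Lam(2)
    by (auto intro!: reds_congs simp: lift_l_lift_l mfree_lift_l)
next
  case (Mu t)
  show ?case using Mu(1)[of "Suc a" "lift_m 0 u" "lift_m 0 v" "lift_mE 0 f"] Mu(2)
    by (auto intro!: reds_congs simp: lift_l_lift_m mfree_lift_m0)
next
  case (MApp b t)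
  show ?case
  proof (cases "b = a")
    case True
    have "reds (msubst (msubst t a (Case u v)) a f) (msubst t a (Case (App u (lift_lE 0 f)) (App v (lift_lE 0 f))))"
      using MApp by auto
    then have "reds (App (App (msubst (msubst t a (Case u v)) a f) (Case u v)) f)
       (App (App (msubst t a (Case (App u (lift_lE 0 f)) (App v (lift_lE 0 f)))) (Case u v)) f)"
      by (auto intro!: reds_congs)
    also have "red \<dots> (App (msubst t a (Case (App u (lift_lE 0 f)) (App v (lift_lE 0 f)))) (Case (App u (lift_lE 0 f)) (App v (lift_lE 0 f))))"
      by (rule red_redE.comm)
    finally show ?thesis using True MApp(2) by (simp add: msubst_mfree reds_MApp)
  next
    case False
    then show ?thesis using MApp by (auto intro!: reds_congs)
  qed
next
  case (Case t1 t2)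
  show ?case using Case(1)[of a "lift_l (Suc 0) u" "lift_l (Suc 0) v" "lift_lE 0 f"]
      Case(2)[of a "lift_l (Suc 0) u" "lift_l (Suc 0) v" "lift_lE 0 f"] Case(3)
    by (auto intro!: reds_congs simp: lift_l_lift_l mfree_lift_l)
qed (auto intro!: reds_congs)

fun apps :: "trm \<Rightarrow> elim list \<Rightarrow> trm" where
  "apps t [] = t"
| "apps t (e # es) = apps (App t e) es"

lemma apps_snoc: "apps t (es @ [e]) = App (apps t es) e"
  by (induct es arbitrary: t) auto

inductive sred :: "elim list \<Rightarrow> elim list \<Rightarrow> bool" where
  s_elem: "redE e e' \<Longrightarrow> sred (e # es) (e' # es)"
| s_tail: "sred es es' \<Longrightarrow> sred (e # es) (e # es')"
| s_comm: "sred (Case u v # e # es) (Case (App u (lift_lE 0 e)) (App v (lift_lE 0 e)) # es)"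

inductive SN :: "trm \<Rightarrow> bool" where
  SNI: "(\<And>y. red x y \<Longrightarrow> SN y) \<Longrightarrow> SN x"

inductive root :: "trm \<Rightarrow> trm \<Rightarrow> bool" where
  "root (App (Lam u) (ETm v)) (subst u 0 v)"
| "root (App (Pair t1 t2) Proj1) t1"
| "root (App (Pair t1 t2) Proj2) t2"
| "root (App (Inj1 t) (Case u1 u2)) (subst u1 0 t)"
| "root (App (Inj2 t) (Case u1 u2)) (subst u2 0 t)"
| "root (App (Mu t) e) (Mu (msubst t 0 (lift_mE 0 e)))"

definition notApp :: "trm \<Rightarrow> bool" where "notApp h = (\<forall>a b. h \<noteq> App a b)"

lemma red_apps_head: "red h h' \<Longrightarrow> red (apps h es) (apps h' es)"
  by (induct es arbitrary: h h') (simp, metis apps.simps(2) red_redE.c_app1)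

lemma reds_apps_head: "reds h h' \<Longrightarrow> reds (apps h es) (apps h' es)"
  by (rule rtc_map[where r=red and s=red and f="\<lambda>x. apps x es"]) (auto intro: red_apps_head)

lemma sred_apps: "sred es es' \<Longrightarrow> red (apps h es) (apps h es')"
proof (induct arbitrary: h rule: sred.induct)
  case (s_elem e e' es) then show ?case by (auto intro!: red_apps_head intro: red_redE.intros)
next
  case (s_tail es es' e) then show ?case by auto
next
  case (s_comm u v e es) then show ?case by (auto intro!: red_apps_head intro: red_redE.intros)
qed

lemma sred_snoc: "sred es es' \<Longrightarrow> sred (es @ [e]) (es' @ [e])"
  by (induct rule: sred.induct) (auto intro: sred.intros)

lemma sred_prepend: "sred es es' \<Longrightarrow> sred (pre @ es) (pre @ es')"
  by (induct pre) (auto intro: sred.intros)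

lemma sred_last: "redE e e' \<Longrightarrow> sred (es @ [e]) (es @ [e'])"
  by (induct es) (auto intro: sred.intros)

lemma sred_length: "sred es es' \<Longrightarrow> length es' \<le> length es"
  by (induct rule: sred.induct) auto

lemma apps_App: "notApp h \<Longrightarrow> apps h es = App a b \<Longrightarrow> \<exists>es0. es = es0 @ [b] \<and> a = apps h es0"
proof (induct es rule: rev_induct)
  case Nil then show ?case by (auto simp: notApp_def)
next
  case (snoc x xs) then show ?case by (auto simp: apps_snoc)
qed

inductive_cases redAppE: "red (App t e) y"
inductive_cases redLamE: "red (Lam t) y"
inductive_cases redPairE: "red (Pair t u) y"
inductive_cases redInj1E: "red (Inj1 t) y"
inductive_cases redInj2E: "red (Inj2 t) y"
inductive_cases redMuE: "red (Mu t) y"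
inductive_cases redMAppE: "red (MApp a t) y"
inductive_cases redLVarE: "red (LVar i) y"
inductive_cases redETmE: "redE (ETm t) y"
inductive_cases redProj1E: "redE Proj1 y"
inductive_cases redProj2E: "redE Proj2 y"
inductive_cases redCaseE: "redE (Case u v) y"
inductive_cases rootE: "root (App h e) z"

lemma apps_ne: "es \<noteq> [] \<Longrightarrow> \<exists>a b. apps h es = App a b"
  by (cases es rule: rev_exhaust) (auto simp: apps_snoc)

lemma red_apps_inv:
  assumes "notApp h"
  shows "red (apps h es) y \<Longrightarrow> (\<exists>h'. red h h' \<and> y = apps h' es) \<or> (\<exists>es'. sred es es' \<and> y = apps h es')
     \<or> (\<exists>e es0 z. es = e # es0 \<and> root (App h e) z \<and> y = apps z es0)"
proof (induct es arbitrary: y rule: rev_induct)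
  case Nil then show ?case by (intro disjI1 exI[of _ y]) simp
next
  case (snoc e es)
  from snoc(2) have r: "red (App (apps h es) e) y" by (simp add: apps_snoc)
  show ?case
  proof (cases "es = []")
    case True
    from r show ?thesis
    proof (cases rule: red.cases)
      case (comm t u1 u2) then show ?thesis using True assms by (simp add: notApp_def)
    next
      case (c_app1 t') then show ?thesis using True by (intro disjI1 exI[of _ t']) simp
    next
      case (c_app2 e') then show ?thesis using True by (intro disjI2 disjI1 exI[of _ "[e']"]) (simp add: sred.s_elem)
    next
      case beta then have "root (App h e) y" using True by (auto intro: root.intros)
      then show ?thesis using True by (intro disjI2 exI[of _ e] exI[of _ "[]"] exI[of _ y]) simp
    next
      case proj1 then have "root (App h e) y" using True by (auto intro: root.intros)
      then show ?thesis using True by (intro disjI2 exI[of _ e] exI[of _ "[]"] exI[of _ y]) simp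
    next
      case proj2 then have "root (App h e) y" using True by (auto intro: root.intros)
      then show ?thesis using True by (intro disjI2 exI[of _ e] exI[of _ "[]"] exI[of _ y]) simp
    next
      case case1 then have "root (App h e) y" using True by (auto intro: root.intros)
      then show ?thesis using True by (intro disjI2 exI[of _ e] exI[of _ "[]"] exI[of _ y]) simp
    next
      case case2 then have "root (App h e) y" using True by (auto intro: root.intros)
      then show ?thesis using True by (intro disjI2 exI[of _ e] exI[of _ "[]"] exI[of _ y]) simp
    next
      case mu then have "root (App h e) y" using True by (auto intro: root.intros)
      then show ?thesis using True by (intro disjI2 exI[of _ e] exI[of _ "[]"] exI[of _ y]) simp
    qed
  next
    case False
    then obtain a b where ab: "apps h es = App a b" using apps_ne by blast
    from r show ?thesis
    proof (cases rule: red.cases)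
      case (comm t u1 u2)
      then obtain es0 where es0: "es = es0 @ [Case u1 u2]" "t = apps h es0" using assms apps_App by blast
      have "sred (es0 @ [Case u1 u2, e]) (es0 @ [Case (App u1 (lift_lE 0 e)) (App u2 (lift_lE 0 e))])"
        by (rule sred_prepend) (rule sred.s_comm)
      then show ?thesis using comm es0
        by (intro disjI2 disjI1 exI[of _ "es0 @ [Case (App u1 (lift_lE 0 e)) (App u2 (lift_lE 0 e))]"]) (simp add: apps_snoc)
    next
      case (c_app1 t')
      from snoc(1)[OF this(2)] show ?thesis
      proof (elim disjE exE conjE)
        fix h' assume "red h h'" "t' = apps h' es"
        then show ?thesis using c_app1 by (intro disjI1 exI[of _ h']) (simp add: apps_snoc)
      next
        fix es' assume "sred es es'" "t' = apps h es'"
        then show ?thesis using c_app1 by (intro disjI2 disjI1 exI[of _ "es' @ [e]"]) (simp add: apps_snoc sred_snoc)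
      next
        fix e0 es0 z assume "es = e0 # es0" "root (App h e0) z" "t' = apps z es0"
        then show ?thesis using c_app1 by (intro disjI2 exI[of _ e0] exI[of _ "es0 @ [e]"] exI[of _ z]) (simp add: apps_snoc)
      qed
    next
      case (c_app2 e')
      then show ?thesis by (intro disjI2 disjI1 exI[of _ "es @ [e']"]) (simp add: apps_snoc sred_last)
    next
      case beta then show ?thesis using ab by simp
    next
      case proj1 then show ?thesis using ab by simp
    next
      case proj2 then show ?thesis using ab by simp
    next
      case case1 then show ?thesis using ab by simp
    next
      case case2 then show ?thesis using ab by simp
    next
      case mu then show ?thesis using ab by simp
    qed
  qed
qed

lemma SN_red: "SN x \<Longrightarrow> red x y \<Longrightarrow> SN y"
  by (erule SN.cases) blast

lemma SN_reds: "reds x y \<Longrightarrow> SN x \<Longrightarrow> SN y"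
  by (induct rule: rtranclp_induct) (auto intro: SN_red)

definition redSN :: "(trm \<times> trm) set" where "redSN = {(y, x). SN x \<and> red x y}"

lemma wf_redSN: "wf redSN"
proof (rule acc_wfI, rule allI)
  fix x
  show "x \<in> Wellfounded.acc redSN"
  proof (cases "SN x")
    case True
    then show ?thesis
    proof (induct rule: SN.induct)
      case (SNI x)
      show ?case by (rule accI) (use SNI in \<open>auto simp: redSN_def\<close>)
    qed
  next
    case False
    show ?thesis by (rule accI) (use False in \<open>auto simp: redSN_def\<close>)
  qed
qed

declare apps.simps(2)[simp del]
lemma apps_Cons: "apps t (e # es) = apps (App t e) es" by (rule apps.simps(2))

lemma SN_by_wf:
  assumes "wf R"
    and step: "\<And>x y. I x \<Longrightarrow> red (F x) y \<Longrightarrow> SN y \<or> (\<exists>x'. I x' \<and> (x', x) \<in> R \<and> y = F x')"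
    and "I x"
  shows "SN (F x)"
  using assms(1,3)
proof (induct x rule: wf_induct_rule)
  case (less x)
  show ?case
  proof (rule SNI)
    fix y assume "red (F x) y"
    from step[OF less(2) this] show "SN y" using less(1) by blast
  qed
qed

lemma SN_reflect:
  assumes f: "\<And>x y. red x y \<Longrightarrow> red (f x) (f y)" and "SN (f x)"
  shows "SN x"
proof -
  have "SN z \<Longrightarrow> (\<forall>x. f x = z \<longrightarrow> SN x)" for z
  proof (induct rule: SN.induct)
    case (SNI z)
    show ?case
    proof (intro allI impI)
      fix x assume "f x = z"
      show "SN x"
      proof (rule SN.SNI)
        fix y assume "red x y"
        then have "red z (f y)" using f \<open>f x = z\<close> by blast
        then show "SN y" using SNI by blast
      qed
    qed
  qed
  then show ?thesis using assms(2) by blast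
qed

lemma redSN_iff[simp]: "(a, b) \<in> redSN \<longleftrightarrow> SN b \<and> red b a" by (simp add: redSN_def)

lemma SN_Lam: "SN t \<Longrightarrow> SN (Lam t)"
  by (rule SN_by_wf[where R=redSN and I=SN and F=Lam, OF wf_redSN])
     (erule redLamE, auto intro: SN_red)
lemma SN_Inj1: "SN t \<Longrightarrow> SN (Inj1 t)"
  by (rule SN_by_wf[where R=redSN and I=SN and F=Inj1, OF wf_redSN])
     (erule redInj1E, auto intro: SN_red)
lemma SN_Inj2: "SN t \<Longrightarrow> SN (Inj2 t)"
  by (rule SN_by_wf[where R=redSN and I=SN and F=Inj2, OF wf_redSN])
     (erule redInj2E, auto intro: SN_red)
lemma SN_Mu: "SN t \<Longrightarrow> SN (Mu t)"
  by (rule SN_by_wf[where R=redSN and I=SN and F=Mu, OF wf_redSN])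
     (erule redMuE, auto intro: SN_red)
lemma SN_MApp: "SN t \<Longrightarrow> SN (MApp a t)"
  by (rule SN_by_wf[where R=redSN and I=SN and F="MApp a", OF wf_redSN])
     (erule redMAppE, auto intro: SN_red)
lemma SN_Pair: "SN t \<Longrightarrow> SN u \<Longrightarrow> SN (Pair t u)"
proof -
  assume a: "SN t" "SN u"
  have "SN ((\<lambda>(a, b). Pair a b) (t, u))"
    by (rule SN_by_wf[where R="redSN <*lex*> redSN" and I="\<lambda>(a, b). SN a \<and> SN b"])
       (auto intro: wf_lex_prod wf_redSN SN_red elim!: redPairE simp: a)
  then show ?thesis by simp
qed

lemma SN_App_head: "SN (App t e) \<Longrightarrow> SN t"
  by (rule SN_reflect[where f="\<lambda>x. App x e"]) (auto intro: red_redE.intros)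
lemma SN_apps_head: "SN (apps t es) \<Longrightarrow> SN t"
  by (rule SN_reflect[where f="\<lambda>x. apps x es"]) (auto intro: red_apps_head)
lemma SN_subst: "SN (subst t k w) \<Longrightarrow> SN t"
  by (rule SN_reflect[where f="\<lambda>x. subst x k w"]) (auto intro: red_subst)

lemma notApp_simps[simp]: "notApp (LVar i)" "notApp (Lam t)" "notApp (Pair t u)" "notApp (Inj1 t)"
  "notApp (Inj2 t)" "notApp (Mu t)" "notApp (MApp a t)"
  by (auto simp: notApp_def)

lemma red_apps_cons_inv:
  assumes "notApp h" "red (apps h (e # es)) y"
  shows "(\<exists>h'. red h h' \<and> y = apps h' (e # es)) \<or>
   (\<exists>e'. redE e e' \<and> y = apps h (e' # es)) \<or>
   (\<exists>es'. sred es es' \<and> y = apps h (e # es')) \<or>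
   (\<exists>u v e2 es2. e = Case u v \<and> es = e2 # es2 \<and> y = apps h (Case (App u (lift_lE 0 e2)) (App v (lift_lE 0 e2)) # es2)) \<or>
   (\<exists>z. root (App h e) z \<and> y = apps z es)"
  using red_apps_inv[OF assms]
proof (elim disjE exE conjE)
  fix es' assume "sred (e # es) es'" "y = apps h es'"
  then show ?thesis by (cases rule: sred.cases) blast+
qed blast+

lemma SN_stack: "SN (apps h es) \<Longrightarrow> SN (apps (LVar x) es)"
proof -
  assume a: "SN (apps h es)"
  show ?thesis
  proof (rule SN_by_wf[where R="inv_image redSN (apps h)" and I="\<lambda>es. SN (apps h es)" and F="apps (LVar x)"])
    show "wf (inv_image redSN (apps h))" by (intro wf_inv_image wf_redSN)
  next
    fix es y assume I: "SN (apps h es)" and r: "red (apps (LVar x) es) y"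
    from red_apps_inv[OF notApp_simps(1) r] show "SN y \<or> (\<exists>x'. SN (apps h x') \<and> (x', es) \<in> inv_image redSN (apps h) \<and> y = apps (LVar x) x')"
    proof (elim disjE exE conjE)
      fix h' assume "red (LVar x) h'" then show ?thesis by (auto elim: redLVarE)
    next
      fix es' assume "sred es es'" "y = apps (LVar x) es'"
      then show ?thesis using I by (auto intro: sred_apps SN_red)
    next
      fix e es0 z assume "root (App (LVar x) e) z" then show ?thesis by (auto elim: rootE)
    qed
  qed (rule a)
qed

lemma redE_Case_from: "redE e e' \<Longrightarrow> e' = Case u v \<Longrightarrow> \<exists>u v. e = Case u v"
  by (induct rule: redE.cases) auto

lemma sred_map_lift: "sred es es' \<Longrightarrow> sred (map (lift_lE k) es) (map (lift_lE k) es')"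
proof (induct arbitrary: k rule: sred.induct)
  case (s_elem e e' es) then show ?case by (auto intro: sred.intros red_lift_l)
next
  case (s_tail es es' e) then show ?case by (auto intro: sred.intros)
next
  case (s_comm u v e es)
  show ?case using sred.s_comm[of "lift_l (Suc k) u" "lift_l (Suc k) v" "lift_lE k e" "map (lift_lE k) es"]
    by (simp add: lift_l_lift_l)
qed

lemma SN_var_cons:
  assumes "\<forall>u v. e \<noteq> Case u v" "SN (App (LVar 0) e)" "SN (apps (LVar x) es)"
  shows "SN (apps (LVar x) (e # es))"
proof -
  let ?F = "\<lambda>(e, es). apps (LVar x) (e # es)"
  let ?I = "\<lambda>(e, es). (\<forall>u v. e \<noteq> Case u v) \<and> SN (App (LVar 0) e) \<and> SN (apps (LVar x) es)"
  let ?R = "inv_image (redSN <*lex*> redSN) (\<lambda>(e, es). (App (LVar 0) e, apps (LVar x) es))"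
  have "SN (?F (e, es))"
  proof (rule SN_by_wf[where I = ?I and R = ?R])
    show "wf ?R" by (intro wf_inv_image wf_lex_prod wf_redSN)
  next
    fix p y assume I: "?I p" and r: "red (?F p) y"
    obtain e es where p: "p = (e, es)" by (cases p)
    from r p have r': "red (apps (LVar x) (e # es)) y" by simp
    from I p have I': "\<forall>u v. e \<noteq> Case u v" "SN (App (LVar 0) e)" "SN (apps (LVar x) es)" by auto
    from red_apps_cons_inv[OF notApp_simps(1) r']
    show "SN y \<or> (\<exists>x'. ?I x' \<and> (x', p) \<in> ?R \<and> y = ?F x')"
    proof (elim disjE exE conjE)
      fix h' assume "red (LVar x) h'" then show ?thesis by (auto elim: redLVarE)
    next
      fix e' assume a: "redE e e'" "y = apps (LVar x) (e' # es)"
      have "\<forall>u v. e' \<noteq> Case u v" using I' a redE_Case_from by blast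
      moreover have "red (App (LVar 0) e) (App (LVar 0) e')" using a by (auto intro: red_redE.intros)
      ultimately show ?thesis using a I' p by (intro disjI2 exI[of _ "(e', es)"]) (auto intro: SN_red)
    next
      fix es' assume a: "sred es es'" "y = apps (LVar x) (e # es')"
      have "red (apps (LVar x) es) (apps (LVar x) es')" using a sred_apps by blast
      then show ?thesis using a I' p by (intro disjI2 exI[of _ "(e, es')"]) (auto intro: SN_red)
    next
      fix u v e2 es2 assume "e = Case u v" then show ?thesis using I' by blast
    next
      fix z assume "root (App (LVar x) e) z" then show ?thesis by (auto elim: rootE)
    qed
  qed (use assms in auto)
  then show ?thesis by simp
qed

lemma SN_var_case:
  assumes "SN (apps u (map (lift_lE 0) es))" "SN (apps v (map (lift_lE 0) es))"
  shows "SN (apps (LVar x) (Case u v # es))"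
proof -
  let ?F = "\<lambda>(u, v, es). apps (LVar x) (Case u v # es)"
  let ?I = "\<lambda>(u, v, es). SN (apps u (map (lift_lE 0) es)) \<and> SN (apps v (map (lift_lE 0) es))"
  let ?R = "inv_image (redSN <*lex*> (redSN <*lex*> less_than))
     (\<lambda>(u, v, es). (apps u (map (lift_lE 0) es), apps v (map (lift_lE 0) es), length es))"
  have "SN (?F (u, v, es))"
  proof (rule SN_by_wf[where I = ?I and R = ?R])
    show "wf ?R" by (intro wf_inv_image wf_lex_prod wf_redSN wf_less_than)
  next
    fix p y assume I: "?I p" and r: "red (?F p) y"
    obtain u v es where p: "p = (u, v, es)" by (cases p)
    from r p have r': "red (apps (LVar x) (Case u v # es)) y" by simp
    from I p have I': "SN (apps u (map (lift_lE 0) es))" "SN (apps v (map (lift_lE 0) es))" by auto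
    from red_apps_cons_inv[OF notApp_simps(1) r']
    show "SN y \<or> (\<exists>x'. ?I x' \<and> (x', p) \<in> ?R \<and> y = ?F x')"
    proof (elim disjE exE conjE)
      fix h' assume "red (LVar x) h'" then show ?thesis by (auto elim: redLVarE)
    next
      fix e' assume a: "redE (Case u v) e'" "y = apps (LVar x) (e' # es)"
      show ?thesis
      proof (rule redCaseE[OF a(1)])
        fix u' assume 1: "e' = Case u' v" "red u u'"
        have "red (apps u (map (lift_lE 0) es)) (apps u' (map (lift_lE 0) es))" using 1 by (auto intro: red_apps_head)
        then show ?thesis using a I' p 1 by (intro disjI2 exI[of _ "(u', v, es)"]) (auto intro: SN_red)
      next
        fix v' assume 2: "e' = Case u v'" "red v v'"
        have "red (apps v (map (lift_lE 0) es)) (apps v' (map (lift_lE 0) es))" using 2 by (auto intro: red_apps_head)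
        then show ?thesis using a I' p 2 by (intro disjI2 exI[of _ "(u, v', es)"]) (auto intro: SN_red)
      qed
    next
      fix es' assume a: "sred es es'" "y = apps (LVar x) (Case u v # es')"
      have "red (apps u (map (lift_lE 0) es)) (apps u (map (lift_lE 0) es'))"
        "red (apps v (map (lift_lE 0) es)) (apps v (map (lift_lE 0) es'))"
        using a sred_apps sred_map_lift by blast+
      then show ?thesis using a I' p by (intro disjI2 exI[of _ "(u, v, es')"]) (auto intro: SN_red)
    next
      fix u0 v0 e2 es2 assume a: "Case u v = Case u0 v0" "es = e2 # es2"
        "y = apps (LVar x) (Case (App u0 (lift_lE 0 e2)) (App v0 (lift_lE 0 e2)) # es2)"
      then show ?thesis using I' p
        by (intro disjI2 exI[of _ "(App u (lift_lE 0 e2), App v (lift_lE 0 e2), es2)"]) (auto simp: apps_Cons)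
    next
      fix z assume "root (App (LVar x) (Case u v)) z" then show ?thesis by (auto elim: rootE)
    qed
  qed (use assms in auto)
  then show ?thesis by simp
qed

lemma SN_beta:
  assumes "SN u" "SN (apps (subst X 0 u) es)"
  shows "SN (apps (Lam X) (ETm u # es))"
proof -
  let ?F = "\<lambda>(X, u, es). apps (Lam X) (ETm u # es)"
  let ?I = "\<lambda>(X, u, es). SN u \<and> SN (apps (subst X 0 u) es)"
  let ?R = "inv_image (redSN <*lex*> redSN) (\<lambda>(X, u, es). (u, apps (subst X 0 u) es))"
  have "SN (?F (X, u, es))"
  proof (rule SN_by_wf[where I = ?I and R = ?R])
    show "wf ?R" by (intro wf_inv_image wf_lex_prod wf_redSN)
  next
    fix p y assume I: "?I p" and r: "red (?F p) y"
    obtain X u es where p: "p = (X, u, es)" by (cases p)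
    from r p have r': "red (apps (Lam X) (ETm u # es)) y" by simp
    from I p have I': "SN u" "SN (apps (subst X 0 u) es)" by auto
    from red_apps_cons_inv[OF notApp_simps(2) r']
    show "SN y \<or> (\<exists>x'. ?I x' \<and> (x', p) \<in> ?R \<and> y = ?F x')"
    proof (elim disjE exE conjE)
      fix h' assume a: "red (Lam X) h'" "y = apps h' (ETm u # es)"
      show ?thesis
      proof (rule redLamE[OF a(1)])
        fix X' assume b: "h' = Lam X'" "red X X'"
        have "red (apps (subst X 0 u) es) (apps (subst X' 0 u) es)" using b by (auto intro: red_apps_head red_subst)
        then show ?thesis using a b I' p by (intro disjI2 exI[of _ "(X', u, es)"]) (auto intro: SN_red)
      qed
    next
      fix e' assume a: "redE (ETm u) e'" "y = apps (Lam X) (e' # es)"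
      show ?thesis
      proof (rule redETmE[OF a(1)])
        fix u' assume b: "e' = ETm u'" "red u u'"
        have "reds (apps (subst X 0 u) es) (apps (subst X 0 u') es)" using b by (auto intro: reds_apps_head red_subst_arg)
        then show ?thesis using a b I' p by (intro disjI2 exI[of _ "(X, u', es)"]) (auto intro: SN_red SN_reds)
      qed
    next
      fix es' assume a: "sred es es'" "y = apps (Lam X) (ETm u # es')"
      have "red (apps (subst X 0 u) es) (apps (subst X 0 u) es')" using a sred_apps by blast
      then show ?thesis using a I' p by (intro disjI2 exI[of _ "(X, u, es')"]) (auto intro: SN_red)
    next
      fix u0 v0 e2 es2 assume "ETm u = Case u0 v0" then show ?thesis by simp
    next
      fix z assume "root (App (Lam X) (ETm u)) z" "y = apps z es"
      then show ?thesis using I' by (auto elim: rootE)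
    qed
  qed (use assms in auto)
  then show ?thesis by simp
qed

lemma SN_proj1:
  assumes "SN (apps t1 es)" "SN t2"
  shows "SN (apps (Pair t1 t2) (Proj1 # es))"
proof -
  let ?F = "\<lambda>(t1, t2, es). apps (Pair t1 t2) (Proj1 # es)"
  let ?I = "\<lambda>(t1, t2, es). SN (apps t1 es) \<and> SN t2"
  let ?R = "inv_image (redSN <*lex*> redSN) (\<lambda>(t1, t2, es). (apps t1 es, t2))"
  have "SN (?F (t1, t2, es))"
  proof (rule SN_by_wf[where I = ?I and R = ?R])
    show "wf ?R" by (intro wf_inv_image wf_lex_prod wf_redSN)
  next
    fix p y assume I: "?I p" and r: "red (?F p) y"
    obtain t1 t2 es where p: "p = (t1, t2, es)" by (cases p)
    from r p have r': "red (apps (Pair t1 t2) (Proj1 # es)) y" by simp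
    from I p have I': "SN (apps t1 es)" "SN t2" by auto
    from red_apps_cons_inv[OF notApp_simps(3) r']
    show "SN y \<or> (\<exists>x'. ?I x' \<and> (x', p) \<in> ?R \<and> y = ?F x')"
    proof (elim disjE exE conjE)
      fix h' assume a: "red (Pair t1 t2) h'" "y = apps h' (Proj1 # es)"
      show ?thesis
      proof (rule redPairE[OF a(1)])
        fix t1' assume b: "h' = Pair t1' t2" "red t1 t1'"
        have "red (apps t1 es) (apps t1' es)" using b by (auto intro: red_apps_head)
        then show ?thesis using a b I' p by (intro disjI2 exI[of _ "(t1', t2, es)"]) (auto intro: SN_red)
      next
        fix t2' assume b: "h' = Pair t1 t2'" "red t2 t2'"
        then show ?thesis using a b I' p by (intro disjI2 exI[of _ "(t1, t2', es)"]) (auto intro: SN_red)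
      qed
    next
      fix e' assume a: "redE Proj1 e'" then show ?thesis by (auto elim: redProj1E)
    next
      fix es' assume a: "sred es es'" "y = apps (Pair t1 t2) (Proj1 # es')"
      have "red (apps t1 es) (apps t1 es')" using a sred_apps by blast
      then show ?thesis using a I' p by (intro disjI2 exI[of _ "(t1, t2, es')"]) (auto intro: SN_red)
    next
      fix u0 v0 e2 es2 assume "Proj1 = Case u0 v0" then show ?thesis by simp
    next
      fix z assume "root (App (Pair t1 t2) Proj1) z" "y = apps z es"
      then show ?thesis using I' by (auto elim: rootE)
    qed
  qed (use assms in auto)
  then show ?thesis by simp
qed

lemma SN_proj2:
  assumes "SN t1" "SN (apps t2 es)"
  shows "SN (apps (Pair t1 t2) (Proj2 # es))"
proof -
  let ?F = "\<lambda>(t1, t2, es). apps (Pair t1 t2) (Proj2 # es)"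
  let ?I = "\<lambda>(t1, t2, es). SN (apps t2 es) \<and> SN t1"
  let ?R = "inv_image (redSN <*lex*> redSN) (\<lambda>(t1, t2, es). (apps t2 es, t1))"
  have "SN (?F (t1, t2, es))"
  proof (rule SN_by_wf[where I = ?I and R = ?R])
    show "wf ?R" by (intro wf_inv_image wf_lex_prod wf_redSN)
  next
    fix p y assume I: "?I p" and r: "red (?F p) y"
    obtain t1 t2 es where p: "p = (t1, t2, es)" by (cases p)
    from r p have r': "red (apps (Pair t1 t2) (Proj2 # es)) y" by simp
    from I p have I': "SN (apps t2 es)" "SN t1" by auto
    from red_apps_cons_inv[OF notApp_simps(3) r']
    show "SN y \<or> (\<exists>x'. ?I x' \<and> (x', p) \<in> ?R \<and> y = ?F x')"
    proof (elim disjE exE conjE)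
      fix h' assume a: "red (Pair t1 t2) h'" "y = apps h' (Proj2 # es)"
      show ?thesis
      proof (rule redPairE[OF a(1)])
        fix t1' assume b: "h' = Pair t1' t2" "red t1 t1'"
        then show ?thesis using a b I' p by (intro disjI2 exI[of _ "(t1', t2, es)"]) (auto intro: SN_red)
      next
        fix t2' assume b: "h' = Pair t1 t2'" "red t2 t2'"
        have "red (apps t2 es) (apps t2' es)" using b by (auto intro: red_apps_head)
        then show ?thesis using a b I' p by (intro disjI2 exI[of _ "(t1, t2', es)"]) (auto intro: SN_red)
      qed
    next
      fix e' assume a: "redE Proj2 e'" then show ?thesis by (auto elim: redProj2E)
    next
      fix es' assume a: "sred es es'" "y = apps (Pair t1 t2) (Proj2 # es')"
      have "red (apps t2 es) (apps t2 es')" using a sred_apps by blast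
      then show ?thesis using a I' p by (intro disjI2 exI[of _ "(t1, t2, es')"]) (auto intro: SN_red)
    next
      fix u0 v0 e2 es2 assume "Proj2 = Case u0 v0" then show ?thesis by simp
    next
      fix z assume "root (App (Pair t1 t2) Proj2) z" "y = apps z es"
      then show ?thesis using I' by (auto elim: rootE)
    qed
  qed (use assms in auto)
  then show ?thesis by simp
qed

lemma SN_inj1:
  assumes "SN w" "SN (apps (subst u 0 w) es)" "SN (apps v (map (lift_lE 0) es))"
  shows "SN (apps (Inj1 w) (Case u v # es))"
proof -
  let ?F = "\<lambda>(w, u, v, es). apps (Inj1 w) (Case u v # es)"
  let ?I = "\<lambda>(w, u, v, es). SN w \<and> SN (apps (subst u 0 w) es) \<and> SN (apps v (map (lift_lE 0) es))"
  let ?R = "inv_image (redSN <*lex*> (redSN <*lex*> (redSN <*lex*> less_than)))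
     (\<lambda>(w, u, v, es). (w, apps (subst u 0 w) es, apps v (map (lift_lE 0) es), length es))"
  have "SN (?F (w, u, v, es))"
  proof (rule SN_by_wf[where I = ?I and R = ?R])
    show "wf ?R" by (intro wf_inv_image wf_lex_prod wf_redSN wf_less_than)
  next
    fix p y assume I: "?I p" and r: "red (?F p) y"
    obtain w u v es where p: "p = (w, u, v, es)" by (cases p)
    from r p have r': "red (apps (Inj1 w) (Case u v # es)) y" by simp
    from I p have I': "SN w" "SN (apps (subst u 0 w) es)" "SN (apps v (map (lift_lE 0) es))" by auto
    from red_apps_cons_inv[OF notApp_simps(4) r']
    show "SN y \<or> (\<exists>x'. ?I x' \<and> (x', p) \<in> ?R \<and> y = ?F x')"
    proof (elim disjE exE conjE)
      fix h' assume a: "red (Inj1 w) h'" "y = apps h' (Case u v # es)"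
      show ?thesis
      proof (rule redInj1E[OF a(1)])
        fix w' assume b: "h' = Inj1 w'" "red w w'"
        have "reds (apps (subst u 0 w) es) (apps (subst u 0 w') es)" using b by (auto intro: reds_apps_head red_subst_arg)
        then show ?thesis using a b I' p by (intro disjI2 exI[of _ "(w', u, v, es)"]) (auto intro: SN_red SN_reds)
      qed
    next
      fix e' assume a: "redE (Case u v) e'" "y = apps (Inj1 w) (e' # es)"
      show ?thesis
      proof (rule redCaseE[OF a(1)])
        fix u' assume b: "e' = Case u' v" "red u u'"
        have "red (apps (subst u 0 w) es) (apps (subst u' 0 w) es)" "red (apps u (map (lift_lE 0) es)) (apps u' (map (lift_lE 0) es))"
          using b by (auto intro: red_apps_head red_subst)
        then show ?thesis using a b I' p by (intro disjI2 exI[of _ "(w, u', v, es)"]) (auto intro: SN_red)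
      next
        fix v' assume b: "e' = Case u v'" "red v v'"
        have "red (apps (subst v 0 w) es) (apps (subst v' 0 w) es)" "red (apps v (map (lift_lE 0) es)) (apps v' (map (lift_lE 0) es))"
          using b by (auto intro: red_apps_head red_subst)
        then show ?thesis using a b I' p by (intro disjI2 exI[of _ "(w, u, v', es)"]) (auto intro: SN_red)
      qed
    next
      fix es' assume a: "sred es es'" "y = apps (Inj1 w) (Case u v # es')"
      have "red (apps (subst u 0 w) es) (apps (subst u 0 w) es')"
        "red (apps v (map (lift_lE 0) es)) (apps v (map (lift_lE 0) es'))"
        using a sred_apps sred_map_lift by blast+
      then show ?thesis using a I' p by (intro disjI2 exI[of _ "(w, u, v, es')"]) (auto intro: SN_red)
    next
      fix u0 v0 e2 es2 assume a: "Case u v = Case u0 v0" "es = e2 # es2"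
        "y = apps (Inj1 w) (Case (App u0 (lift_lE 0 e2)) (App v0 (lift_lE 0 e2)) # es2)"
      then show ?thesis using I' p
        by (intro disjI2 exI[of _ "(w, App u (lift_lE 0 e2), App v (lift_lE 0 e2), es2)"])
          (auto simp: apps_Cons subst_lift_l)
    next
      fix z assume "root (App (Inj1 w) (Case u v)) z" "y = apps z (es)"
      then show ?thesis using I' by (auto elim: rootE)
    qed
  qed (use assms in auto)
  then show ?thesis by simp
qed

lemma SN_inj2:
  assumes "SN w" "SN (apps (subst v 0 w) es)" "SN (apps u (map (lift_lE 0) es))"
  shows "SN (apps (Inj2 w) (Case u v # es))"
proof -
  let ?F = "\<lambda>(w, u, v, es). apps (Inj2 w) (Case u v # es)"
  let ?I = "\<lambda>(w, u, v, es). SN w \<and> SN (apps (subst v 0 w) es) \<and> SN (apps u (map (lift_lE 0) es))"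
  let ?R = "inv_image (redSN <*lex*> (redSN <*lex*> (redSN <*lex*> less_than)))
     (\<lambda>(w, u, v, es). (w, apps (subst v 0 w) es, apps u (map (lift_lE 0) es), length es))"
  have "SN (?F (w, u, v, es))"
  proof (rule SN_by_wf[where I = ?I and R = ?R])
    show "wf ?R" by (intro wf_inv_image wf_lex_prod wf_redSN wf_less_than)
  next
    fix p y assume I: "?I p" and r: "red (?F p) y"
    obtain w u v es where p: "p = (w, u, v, es)" by (cases p)
    from r p have r': "red (apps (Inj2 w) (Case u v # es)) y" by simp
    from I p have I': "SN w" "SN (apps (subst v 0 w) es)" "SN (apps u (map (lift_lE 0) es))" by auto
    from red_apps_cons_inv[OF notApp_simps(5) r']
    show "SN y \<or> (\<exists>x'. ?I x' \<and> (x', p) \<in> ?R \<and> y = ?F x')"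
    proof (elim disjE exE conjE)
      fix h' assume a: "red (Inj2 w) h'" "y = apps h' (Case u v # es)"
      show ?thesis
      proof (rule redInj2E[OF a(1)])
        fix w' assume b: "h' = Inj2 w'" "red w w'"
        have "reds (apps (subst v 0 w) es) (apps (subst v 0 w') es)" using b by (auto intro: reds_apps_head red_subst_arg)
        then show ?thesis using a b I' p by (intro disjI2 exI[of _ "(w', u, v, es)"]) (auto intro: SN_red SN_reds)
      qed
    next
      fix e' assume a: "redE (Case u v) e'" "y = apps (Inj2 w) (e' # es)"
      show ?thesis
      proof (rule redCaseE[OF a(1)])
        fix u' assume b: "e' = Case u' v" "red u u'"
        have "red (apps (subst u 0 w) es) (apps (subst u' 0 w) es)" "red (apps u (map (lift_lE 0) es)) (apps u' (map (lift_lE 0) es))"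
          using b by (auto intro: red_apps_head red_subst)
        then show ?thesis using a b I' p by (intro disjI2 exI[of _ "(w, u', v, es)"]) (auto intro: SN_red)
      next
        fix v' assume b: "e' = Case u v'" "red v v'"
        have "red (apps (subst v 0 w) es) (apps (subst v' 0 w) es)" "red (apps v (map (lift_lE 0) es)) (apps v' (map (lift_lE 0) es))"
          using b by (auto intro: red_apps_head red_subst)
        then show ?thesis using a b I' p by (intro disjI2 exI[of _ "(w, u, v', es)"]) (auto intro: SN_red)
      qed
    next
      fix es' assume a: "sred es es'" "y = apps (Inj2 w) (Case u v # es')"
      have "red (apps (subst v 0 w) es) (apps (subst v 0 w) es')"
        "red (apps u (map (lift_lE 0) es)) (apps u (map (lift_lE 0) es'))"
        using a sred_apps sred_map_lift by blast+
      then show ?thesis using a I' p by (intro disjI2 exI[of _ "(w, u, v, es')"]) (auto intro: SN_red)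
    next
      fix u0 v0 e2 es2 assume a: "Case u v = Case u0 v0" "es = e2 # es2"
        "y = apps (Inj2 w) (Case (App u0 (lift_lE 0 e2)) (App v0 (lift_lE 0 e2)) # es2)"
      then show ?thesis using I' p
        by (intro disjI2 exI[of _ "(w, App u (lift_lE 0 e2), App v (lift_lE 0 e2), es2)"])
          (auto simp: apps_Cons subst_lift_l)
    next
      fix z assume "root (App (Inj2 w) (Case u v)) z" "y = apps z (es)"
      then show ?thesis using I' by (auto elim: rootE)
    qed
  qed (use assms in auto)
  then show ?thesis by simp
qed

definition Ms :: "trm \<Rightarrow> elim list \<Rightarrow> trm" where
  "Ms X es = foldl (\<lambda>Y e. msubst Y 0 (lift_mE 0 e)) X es"

lemma Ms_Nil[simp]: "Ms X [] = X" by (simp add: Ms_def)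
lemma Ms_Cons: "Ms X (e # es) = Ms (msubst X 0 (lift_mE 0 e)) es" by (simp add: Ms_def)

lemma red_Ms: "red X X' \<Longrightarrow> red (Ms X es) (Ms X' es)"
  by (induct es arbitrary: X X') (auto simp: Ms_Cons red_msubst)

lemma reds_Ms: "reds X X' \<Longrightarrow> reds (Ms X es) (Ms X' es)"
  by (rule rtc_map[where r=red and s=red and f="\<lambda>x. Ms x es"]) (auto intro: red_Ms)

lemma sred_Ms: "sred es es' \<Longrightarrow> reds (Ms X es) (Ms X es')"
proof (induct arbitrary: X rule: sred.induct)
  case (s_elem e e' es)
  have "redE (lift_mE 0 e) (lift_mE 0 e')" using s_elem by (rule red_lift_m)
  then have "reds (msubst X 0 (lift_mE 0 e)) (msubst X 0 (lift_mE 0 e'))" by (rule redE_msubst_arg)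
  then show ?case by (simp add: Ms_Cons reds_Ms)
next
  case (s_tail es es' e) then show ?case by (simp add: Ms_Cons)
next
  case (s_comm u v e es)
  have "reds (msubst (msubst X 0 (Case (lift_m 0 u) (lift_m 0 v))) 0 (lift_mE 0 e))
     (msubst X 0 (Case (App (lift_m 0 u) (lift_lE 0 (lift_mE 0 e))) (App (lift_m 0 v) (lift_lE 0 (lift_mE 0 e)))))"
    by (rule msubst_comm) (simp add: mfree_lift_m)
  then show ?case by (simp add: Ms_Cons reds_Ms lift_l_lift_m)
qed

lemma SN_mu:
  assumes "SN (apps (LVar 0) es)" "SN (Ms X es)"
  shows "SN (apps (Mu X) es)"
proof -
  let ?F = "\<lambda>(X, es). apps (Mu X) es"
  let ?I = "\<lambda>(X, es). SN (apps (LVar 0) es) \<and> SN (Ms X es)"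
  let ?R = "inv_image (less_than <*lex*> (redSN <*lex*> redSN)) (\<lambda>(X, es). (length es, apps (LVar 0) es, Ms X es))"
  have "SN (?F (X, es))"
  proof (rule SN_by_wf[where I = ?I and R = ?R])
    show "wf ?R" by (intro wf_inv_image wf_lex_prod wf_redSN wf_less_than)
  next
    fix p y assume I: "?I p" and r: "red (?F p) y"
    obtain X es where p: "p = (X, es)" by (cases p)
    from r p have r': "red (apps (Mu X) es) y" by simp
    from I p have I': "SN (apps (LVar 0) es)" "SN (Ms X es)" by auto
    from red_apps_inv[OF notApp_simps(6) r']
    show "SN y \<or> (\<exists>x'. ?I x' \<and> (x', p) \<in> ?R \<and> y = ?F x')"
    proof (elim disjE exE conjE)
      fix h' assume a: "red (Mu X) h'" "y = apps h' es"
      show ?thesis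
      proof (rule redMuE[OF a(1)])
        fix X' assume b: "h' = Mu X'" "red X X'"
        have "red (Ms X es) (Ms X' es)" using b by (auto intro: red_Ms)
        then show ?thesis using a b I' p by (intro disjI2 exI[of _ "(X', es)"]) (auto intro: SN_red)
      qed
    next
      fix es' assume a: "sred es es'" "y = apps (Mu X) es'"
      have "red (apps (LVar 0) es) (apps (LVar 0) es')" using a sred_apps by blast
      moreover have "reds (Ms X es) (Ms X es')" using a sred_Ms by blast
      moreover have "length es' \<le> length es" using a sred_length by blast
      ultimately show ?thesis using a I' p by (intro disjI2 exI[of _ "(X, es')"]) (auto intro: SN_red SN_reds)
    next
      fix e es0 z assume a: "es = e # es0" "root (App (Mu X) e) z" "y = apps z es0"
      have "SN (apps (LVar 0) es0)" using I' a by (auto simp: apps_Cons intro: SN_stack)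
      then show ?thesis using a I' p
        by (intro disjI2 exI[of _ "(msubst X 0 (lift_mE 0 e), es0)"]) (auto elim!: rootE simp: Ms_Cons)
    qed
  qed (use assms in auto)
  then show ?thesis by simp
qed

definition upl :: "(nat \<Rightarrow> trm) \<Rightarrow> nat \<Rightarrow> trm" where
  "upl \<sigma> = (\<lambda>i. case i of 0 \<Rightarrow> LVar 0 | Suc j \<Rightarrow> lift_l 0 (\<sigma> j))"
definition mapl :: "(nat \<Rightarrow> elim list) \<Rightarrow> nat \<Rightarrow> elim list" where
  "mapl \<rho> = (\<lambda>a. map (lift_lE 0) (\<rho> a))"
definition upm :: "(nat \<Rightarrow> elim list) \<Rightarrow> nat \<Rightarrow> elim list" where
  "upm \<rho> = (\<lambda>a. case a of 0 \<Rightarrow> [] | Suc b \<Rightarrow> map (lift_mE 0) (\<rho> b))"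
definition scons :: "trm \<Rightarrow> (nat \<Rightarrow> trm) \<Rightarrow> nat \<Rightarrow> trm" where
  "scons u \<sigma> = (\<lambda>i. case i of 0 \<Rightarrow> u | Suc j \<Rightarrow> \<sigma> j)"

primrec sub :: "(nat \<Rightarrow> trm) \<Rightarrow> (nat \<Rightarrow> elim list) \<Rightarrow> trm \<Rightarrow> trm"
  and subE :: "(nat \<Rightarrow> trm) \<Rightarrow> (nat \<Rightarrow> elim list) \<Rightarrow> elim \<Rightarrow> elim" where
  "sub \<sigma> \<rho> (LVar i) = \<sigma> i"
| "sub \<sigma> \<rho> (Lam t) = Lam (sub (upl \<sigma>) (mapl \<rho>) t)"
| "sub \<sigma> \<rho> (App t e) = App (sub \<sigma> \<rho> t) (subE \<sigma> \<rho> e)"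
| "sub \<sigma> \<rho> (Pair t u) = Pair (sub \<sigma> \<rho> t) (sub \<sigma> \<rho> u)"
| "sub \<sigma> \<rho> (Inj1 t) = Inj1 (sub \<sigma> \<rho> t)"
| "sub \<sigma> \<rho> (Inj2 t) = Inj2 (sub \<sigma> \<rho> t)"
| "sub \<sigma> \<rho> (Mu t) = Mu (sub (\<lambda>i. lift_m 0 (\<sigma> i)) (upm \<rho>) t)"
| "sub \<sigma> \<rho> (MApp a t) = MApp a (apps (sub \<sigma> \<rho> t) (\<rho> a))"
| "subE \<sigma> \<rho> (ETm t) = ETm (sub \<sigma> \<rho> t)"
| "subE \<sigma> \<rho> Proj1 = Proj1"
| "subE \<sigma> \<rho> Proj2 = Proj2"
| "subE \<sigma> \<rho> (Case u v) = Case (sub (upl \<sigma>) (mapl \<rho>) u) (sub (upl \<sigma>) (mapl \<rho>) v)"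

lemma sub_id:
  fixes t :: trm and e :: elim
  shows "\<And>\<sigma> \<rho>. (\<forall>i. \<sigma> i = LVar i) \<Longrightarrow> (\<forall>a. \<rho> a = []) \<Longrightarrow> sub \<sigma> \<rho> t = t"
    and "\<And>\<sigma> \<rho>. (\<forall>i. \<sigma> i = LVar i) \<Longrightarrow> (\<forall>a. \<rho> a = []) \<Longrightarrow> subE \<sigma> \<rho> e = e"
  by (induct t and e) (auto simp: upl_def mapl_def upm_def split: nat.splits)

lemma subst_apps: "subst (apps t es) k w = apps (subst t k w) (map (\<lambda>e. substE e k w) es)"
  by (induct es arbitrary: t) (auto simp: apps_Cons)
lemma lift_l_apps: "lift_l k (apps t es) = apps (lift_l k t) (map (lift_lE k) es)"
  by (induct es arbitrary: t) (auto simp: apps_Cons)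
lemma lift_m_apps: "lift_m k (apps t es) = apps (lift_m k t) (map (lift_mE k) es)"
  by (induct es arbitrary: t) (auto simp: apps_Cons)
lemma msubst_apps: "msubst (apps t es) a f = apps (msubst t a f) (map (\<lambda>e. msubstE e a f) es)"
  by (induct es arbitrary: t) (auto simp: apps_Cons)

lemma upl_subst: "(\<lambda>i. subst (upl \<sigma> i) (Suc k) (lift_l 0 u)) = upl (\<lambda>i. subst (\<sigma> i) k u)"
  by (rule ext) (auto simp: upl_def lift_subst_lt split: nat.splits)
lemma mapl_subst: "(\<lambda>a. map (\<lambda>e. substE e (Suc k) (lift_l 0 u)) (mapl \<rho> a)) = mapl (\<lambda>a. map (\<lambda>e. substE e k u) (\<rho> a))"
  by (rule ext) (auto simp: mapl_def lift_subst_lt)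
lemma upm_subst: "(\<lambda>a. map (\<lambda>e. substE e k (lift_m 0 u)) (upm \<rho> a)) = upm (\<lambda>a. map (\<lambda>e. substE e k u) (\<rho> a))"
  by (rule ext) (auto simp: upm_def lift_m_subst split: nat.splits)

lemma subst_sub:
  fixes t :: trm and e :: elim
  shows "\<And>\<sigma> \<rho> k u. subst (sub \<sigma> \<rho> t) k u = sub (\<lambda>i. subst (\<sigma> i) k u) (\<lambda>a. map (\<lambda>e. substE e k u) (\<rho> a)) t"
    and "\<And>\<sigma> \<rho> k u. substE (subE \<sigma> \<rho> e) k u = subE (\<lambda>i. subst (\<sigma> i) k u) (\<lambda>a. map (\<lambda>e. substE e k u) (\<rho> a)) e"
  by (induct t and e) (simp_all add: upl_subst mapl_subst upm_subst lift_m_subst subst_apps)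

lemma subst_sub0: "subst (sub (upl \<sigma>) (mapl \<rho>) t) 0 u = sub (scons u \<sigma>) \<rho> t"
proof -
  have "(\<lambda>i. subst (upl \<sigma> i) 0 u) = scons u \<sigma>"
    by (rule ext) (auto simp: upl_def scons_def subst_lift_l split: nat.splits)
  moreover have "(\<lambda>a. map (\<lambda>e. substE e 0 u) (mapl \<rho> a)) = \<rho>"
    by (rule ext) (simp add: mapl_def subst_lift_l comp_def)
  ultimately show ?thesis by (simp add: subst_sub)
qed

definition shm :: "nat \<Rightarrow> (nat \<Rightarrow> elim list) \<Rightarrow> nat \<Rightarrow> elim list" where
  "shm k \<rho> = (\<lambda>b. if b < k then map (lift_mE k) (\<rho> b) else if b = k then [] else map (lift_mE k) (\<rho> (b - 1)))"

lemma shm_upm: "shm (Suc k) (upm \<rho>) = upm (shm k \<rho>)"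
proof (rule ext)
  fix b show "shm (Suc k) (upm \<rho>) b = upm (shm k \<rho>) b"
    by (cases b) (auto simp: shm_def upm_def lift_m_lift_m split: nat.splits)
qed

lemma shm_mapl: "shm k (mapl \<rho>) = mapl (shm k \<rho>)"
  by (rule ext) (auto simp: shm_def mapl_def lift_l_lift_m)

lemma upl_lift_m: "(\<lambda>i. lift_m k (upl \<sigma> i)) = upl (\<lambda>i. lift_m k (\<sigma> i))"
  by (rule ext) (auto simp: upl_def lift_l_lift_m split: nat.splits)

lemma lift_m_sub:
  fixes t :: trm and e :: elim
  shows "\<And>\<sigma> \<rho> k. lift_m k (sub \<sigma> \<rho> t) = sub (\<lambda>i. lift_m k (\<sigma> i)) (shm k \<rho>) (lift_m k t)"
    and "\<And>\<sigma> \<rho> k. lift_mE k (subE \<sigma> \<rho> e) = subE (\<lambda>i. lift_m k (\<sigma> i)) (shm k \<rho>) (lift_mE k e)"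
proof (induct t and e)
  case (Mu t)
  show ?case by (simp add: Mu shm_upm lift_m_lift_m)
next
  case (MApp a t)
  show ?case by (simp add: MApp lift_m_apps shm_def)
qed (simp_all add: upl_lift_m shm_mapl)

lemma shm0: "shm 0 \<rho> = upm \<rho>"
  by (rule ext) (auto simp: shm_def upm_def split: nat.splits)

lemma lift_m0_sub: "lift_m 0 (sub \<sigma> \<rho> t) = sub (\<lambda>i. lift_m 0 (\<sigma> i)) (upm \<rho>) (lift_m 0 t)"
  by (simp add: lift_m_sub shm0)

lemma msubst_sub:
  fixes t :: trm and e :: elim
  shows "\<And>\<sigma> \<rho> a f. (\<forall>i. mfree a (\<sigma> i)) \<Longrightarrow> (\<forall>b. \<forall>x\<in>set (\<rho> b). mfreeE a x) \<Longrightarrow>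
      msubst (sub \<sigma> \<rho> t) a f = sub \<sigma> (\<rho>(a := \<rho> a @ [f])) t"
    and "\<And>\<sigma> \<rho> a f. (\<forall>i. mfree a (\<sigma> i)) \<Longrightarrow> (\<forall>b. \<forall>x\<in>set (\<rho> b). mfreeE a x) \<Longrightarrow>
      msubstE (subE \<sigma> \<rho> e) a f = subE \<sigma> (\<rho>(a := \<rho> a @ [f])) e"
proof (induct t and e)
  case (LVar i) then show ?case by (simp add: msubst_mfree)
next
  case (Lam t)
  have "(\<forall>i. mfree a (upl \<sigma> i))" using Lam(2) by (auto simp: upl_def mfree_lift_l split: nat.splits)
  moreover have "\<forall>b. \<forall>x\<in>set (mapl \<rho> b). mfreeE a x" using Lam(3) by (auto simp: mapl_def mfree_lift_l)
  moreover have eq: "(mapl \<rho>)(a := mapl \<rho> a @ [lift_lE 0 f]) = mapl (\<rho>(a := \<rho> a @ [f]))"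
    by (rule ext) (simp add: mapl_def)
  ultimately have "msubst (sub (upl \<sigma>) (mapl \<rho>) t) a (lift_lE 0 f) = sub (upl \<sigma>) (mapl (\<rho>(a := \<rho> a @ [f]))) t"
    using Lam(1) by metis
  then show ?case by (simp add: fun_upd_def)
next
  case (Mu t)
  have "(\<forall>i. mfree (Suc a) (lift_m 0 (\<sigma> i)))" using Mu(2) by (auto simp: mfree_lift_m0)
  moreover have "\<forall>b. \<forall>x\<in>set (upm \<rho> b). mfreeE (Suc a) x" using Mu(3) by (auto simp: upm_def mfree_lift_m0 split: nat.splits)
  moreover have eq: "(upm \<rho>)(Suc a := upm \<rho> (Suc a) @ [lift_mE 0 f]) = upm (\<rho>(a := \<rho> a @ [f]))"
    by (rule ext) (simp add: upm_def split: nat.splits)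
  ultimately have "msubst (sub (\<lambda>i. lift_m 0 (\<sigma> i)) (upm \<rho>) t) (Suc a) (lift_mE 0 f) = sub (\<lambda>i. lift_m 0 (\<sigma> i)) (upm (\<rho>(a := \<rho> a @ [f]))) t"
    using Mu(1) by metis
  then show ?case by (simp add: fun_upd_def)
next
  case (MApp b t)
  have m: "map (\<lambda>e. msubstE e a f) (\<rho> b) = \<rho> b" using MApp(3) by (auto simp: msubst_mfree intro: map_idI)
  show ?case using MApp m by (auto simp: msubst_apps apps_snoc)
next
  case (Case u v)
  have "(\<forall>i. mfree a (upl \<sigma> i))" using Case(3) by (auto simp: upl_def mfree_lift_l split: nat.splits)
  moreover have "\<forall>b. \<forall>x\<in>set (mapl \<rho> b). mfreeE a x" using Case(4) by (auto simp: mapl_def mfree_lift_l)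
  moreover have eq: "(mapl \<rho>)(a := mapl \<rho> a @ [lift_lE 0 f]) = mapl (\<rho>(a := \<rho> a @ [f]))"
    by (rule ext) (simp add: mapl_def)
  ultimately have "msubst (sub (upl \<sigma>) (mapl \<rho>) u) a (lift_lE 0 f) = sub (upl \<sigma>) (mapl (\<rho>(a := \<rho> a @ [f]))) u"
     "msubst (sub (upl \<sigma>) (mapl \<rho>) v) a (lift_lE 0 f) = sub (upl \<sigma>) (mapl (\<rho>(a := \<rho> a @ [f]))) v"
    using Case(1,2) by metis+
  then show ?case by (simp add: fun_upd_def)
qed simp_all

lemma Ms_sub:
  "(\<forall>i. mfree 0 (\<sigma> i)) \<Longrightarrow> (\<forall>b. \<forall>x\<in>set (\<rho> b). mfreeE 0 x) \<Longrightarrow>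
     Ms (sub \<sigma> \<rho> t) es = sub \<sigma> (\<rho>(0 := \<rho> 0 @ map (lift_mE 0) es)) t"
proof (induct es arbitrary: \<rho>)
  case Nil then show ?case by simp
next
  case (Cons e es)
  have "Ms (sub \<sigma> \<rho> t) (e # es) = Ms (sub \<sigma> (\<rho>(0 := \<rho> 0 @ [lift_mE 0 e])) t) es"
    using Cons(2,3) by (simp add: Ms_Cons msubst_sub)
  also have "\<dots> = sub \<sigma> (\<rho>(0 := \<rho> 0 @ map (lift_mE 0) (e # es))) t"
    using Cons(2,3) by (subst Cons(1)) (auto simp: mfree_lift_m)
  finally show ?case .
qed

lemma Ms_sub_upm: "Ms (sub (\<lambda>i. lift_m 0 (\<sigma> i)) (upm \<rho>) t) es = sub (\<lambda>i. lift_m 0 (\<sigma> i)) ((upm \<rho>)(0 := map (lift_mE 0) es)) t"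
  by (subst Ms_sub) (auto simp: mfree_lift_m upm_def split: nat.splits)

definition insd :: "nat \<Rightarrow> ty \<Rightarrow> (nat \<Rightarrow> ty) \<Rightarrow> nat \<Rightarrow> ty" where
  "insd k B \<Delta> = (\<lambda>b. if b < k then \<Delta> b else if b = k then B else \<Delta> (b - 1))"

lemma ext_insd: "ext_ctx A (insd k B \<Delta>) = insd (Suc k) B (ext_ctx A \<Delta>)"
  by (rule ext) (auto simp: ext_ctx_def insd_def split: nat.splits)

lemma typing_lift_m: "typing \<Gamma> t A \<Delta> \<Longrightarrow> typing \<Gamma> (lift_m k t) A (insd k B \<Delta>)"
proof (induct arbitrary: k rule: typing.induct)
  case (abs_i \<Gamma> t A \<Delta> a)
  then show ?case by (auto intro!: typing.abs_i simp: insd_def)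
next
  case (abs_e \<Gamma> t A \<Delta>)
  then show ?case using abs_e(2)[of "Suc k"] by (auto intro!: typing.abs_e simp: ext_insd)
qed (auto intro: typing.intros)

lemma insd0: "insd 0 B \<Delta> = ext_ctx B \<Delta>"
  by (rule ext) (auto simp: ext_ctx_def insd_def split: nat.splits)

primrec sz :: "trm \<Rightarrow> nat" and szE :: "elim \<Rightarrow> nat" where
  "sz (LVar i) = 1"
| "sz (Lam t) = Suc (sz t)"
| "sz (App t e) = Suc (sz t + szE e)"
| "sz (Pair t u) = Suc (sz t + sz u)"
| "sz (Inj1 t) = Suc (sz t)"
| "sz (Inj2 t) = Suc (sz t)"
| "sz (Mu t) = Suc (sz t)"
| "sz (MApp a t) = Suc (sz t)"
| "szE (ETm t) = Suc (sz t)"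
| "szE Proj1 = 1"
| "szE Proj2 = 1"
| "szE (Case u v) = Suc (sz u + sz v)"

lemma sz_lift_m:
  fixes t :: trm and e :: elim
  shows "\<And>k. sz (lift_m k t) = sz t" and "\<And>k. szE (lift_mE k e) = szE e"
  by (induct t and e) auto

definition Ln :: "nat \<Rightarrow> trm \<Rightarrow> trm" where "Ln n = (lift_m 0 ^^ n)"
definition LnE :: "nat \<Rightarrow> elim \<Rightarrow> elim" where "LnE n = (lift_mE 0 ^^ n)"

lemma Ln_0[simp]: "Ln 0 t = t" by (simp add: Ln_def)
lemma LnE_0[simp]: "LnE 0 e = e" by (simp add: LnE_def)
lemma LnE_0f[simp]: "LnE 0 = (\<lambda>e. e)" by (simp add: LnE_def id_def)
lemma Ln_Suc: "Ln (Suc n) t = Ln n (lift_m 0 t)" by (simp add: Ln_def funpow_swap1)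
lemma LnE_Suc: "LnE (Suc n) e = LnE n (lift_mE 0 e)" by (simp add: LnE_def funpow_swap1)
lemma Ln_Suc2: "Ln (Suc n) t = lift_m 0 (Ln n t)" by (simp add: Ln_def)
lemma Ln_LVar[simp]: "Ln n (LVar i) = LVar i" by (induct n) (auto simp: Ln_Suc2)

definition Tm :: "elim list set \<Rightarrow> trm \<Rightarrow> bool" where
  "Tm S X = (\<forall>n es. es \<in> S \<longrightarrow> SN (apps (Ln n X) es))"

fun Sset :: "ty \<Rightarrow> elim list set" where
  "Sset (TVar n) = {[]}"
| "Sset Bot = {[]}"
| "Sset (Imp A B) = {[]} \<union> {ETm u # es | u es. Tm (Sset A) u \<and> es \<in> Sset B}"
| "Sset (Conj A B) = {[]} \<union> {Proj1 # es | es. es \<in> Sset A} \<union> {Proj2 # es | es. es \<in> Sset B}"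
| "Sset (Disj A B) = {[]} \<union> {Case u v # es | u v es. \<forall>n.
      (\<forall>w. Tm (Sset A) w \<longrightarrow> SN (apps (subst (Ln n u) 0 w) (map (LnE n) es))) \<and>
      (\<forall>w. Tm (Sset B) w \<longrightarrow> SN (apps (subst (Ln n v) 0 w) (map (LnE n) es)))}"

lemma Nil_Sset[simp]: "[] \<in> Sset A"
  by (cases A) auto

lemma Tm_SN: "Tm (Sset A) X \<Longrightarrow> SN X"
  unfolding Tm_def by (metis Ln_0 Nil_Sset apps.simps(1))

lemma Tm_lift: "Tm S X \<Longrightarrow> Tm S (lift_m 0 X)"
  unfolding Tm_def by (metis Ln_Suc)

lemma Tm_Ln: "Tm S X \<Longrightarrow> Tm S (Ln n X)"
  by (induct n) (auto simp: Ln_Suc2 Tm_lift)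

lemma S_lift: "es \<in> Sset A \<Longrightarrow> map (lift_mE 0) es \<in> Sset A"
proof (induct A arbitrary: es)
  case (Imp A B)
  then show ?case by (auto intro: Tm_lift)
next
  case (Conj A B)
  then show ?case by auto
next
  case (Disj A B)
  then show ?case
    by (auto simp: Ln_Suc[symmetric] LnE_Suc[symmetric] comp_def)
qed auto

lemma S_Ln: "es \<in> Sset A \<Longrightarrow> map (LnE n) es \<in> Sset A"
proof (induct n arbitrary: es)
  case 0 then show ?case by simp
next
  case (Suc n)
  have eq: "map (LnE (Suc n)) es = map (LnE n) (map (lift_mE 0) es)" by (simp add: LnE_Suc)
  show ?case using Suc(1)[OF S_lift[OF Suc(2)]] eq by (simp only:)
qed

lemma SN_LVar: "SN (LVar x)"
  by (rule SNI) (auto elim: redLVarE)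

lemma SN_var_ETm: "SN u \<Longrightarrow> SN (App (LVar y) (ETm u))"
proof -
  assume "SN u"
  then show ?thesis
  proof (induct rule: SN.induct)
    case (SNI u)
    show ?case
    proof (rule SN.SNI)
      fix z assume "red (App (LVar y) (ETm u)) z"
      then have "red (apps (LVar y) [ETm u]) z" by (simp add: apps_Cons)
      from red_apps_cons_inv[OF notApp_simps(1) this] show "SN z"
      proof (elim disjE exE conjE)
        fix h' assume "red (LVar y) h'" then show ?thesis by (auto elim: redLVarE)
      next
        fix e' assume "redE (ETm u) e'" "z = apps (LVar y) [e']"
        then show ?thesis using SNI by (auto elim!: redETmE simp: apps_Cons)
      next
        fix es' assume "sred [] es'" then show ?thesis by (auto elim: sred.cases)
      next
        fix z' assume "root (App (LVar y) (ETm u)) z'" then show ?thesis by (auto elim: rootE)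
      qed simp
    qed
  qed
qed

lemma SN_var_Proj: "SN (App (LVar y) Proj1)" "SN (App (LVar y) Proj2)"
proof -
  show "SN (App (LVar y) Proj1)"
  proof (rule SN.SNI)
    fix z assume "red (App (LVar y) Proj1) z"
    then have "red (apps (LVar y) [Proj1]) z" by (simp add: apps_Cons)
    from red_apps_cons_inv[OF notApp_simps(1) this] show "SN z"
      by (auto elim: redLVarE redProj1E sred.cases rootE)
  qed
  show "SN (App (LVar y) Proj2)"
  proof (rule SN.SNI)
    fix z assume "red (App (LVar y) Proj2) z"
    then have "red (apps (LVar y) [Proj2]) z" by (simp add: apps_Cons)
    from red_apps_cons_inv[OF notApp_simps(1) this] show "SN z"
      by (auto elim: redLVarE redProj2E sred.cases rootE)
  qed
qed

lemma subst_apps_lift: "subst (apps u (map (lift_lE 0) es)) 0 w = apps (subst u 0 w) es"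
  by (simp add: subst_apps comp_def subst_lift_l)

lemma var_S: "es \<in> Sset A \<Longrightarrow> SN (apps (LVar x) es)"
proof (induct A arbitrary: es x)
  case (TVar n) then show ?case by (auto simp: SN_LVar)
next
  case Bot then show ?case by (auto simp: SN_LVar)
next
  case (Imp A B)
  from Imp(3) have "es = [] \<or> (\<exists>u es'. es = ETm u # es' \<and> Tm (Sset A) u \<and> es' \<in> Sset B)" by auto
  then show ?case
  proof (elim disjE exE conjE)
    assume "es = []" then show ?thesis by (auto simp: SN_LVar)
  next
    fix u es' assume a: "es = ETm u # es'" "Tm (Sset A) u" "es' \<in> Sset B"
    show ?thesis unfolding a(1)
      by (rule SN_var_cons) (auto intro: SN_var_ETm Tm_SN[OF a(2)] Imp(2)[OF a(3)])
  qed
next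
  case (Conj A B)
  from Conj(3) have "es = [] \<or> (\<exists>es'. es = Proj1 # es' \<and> es' \<in> Sset A) \<or> (\<exists>es'. es = Proj2 # es' \<and> es' \<in> Sset B)" by auto
  then show ?case
  proof (elim disjE exE conjE)
    assume "es = []" then show ?thesis by (auto simp: SN_LVar)
  next
    fix es' assume a: "es = Proj1 # es'" "es' \<in> Sset A"
    show ?thesis unfolding a(1)
      by (rule SN_var_cons) (auto intro: SN_var_Proj Conj(1)[OF a(2)])
  next
    fix es' assume a: "es = Proj2 # es'" "es' \<in> Sset B"
    show ?thesis unfolding a(1)
      by (rule SN_var_cons) (auto intro: SN_var_Proj Conj(2)[OF a(2)])
  qed
next
  case (Disj A B)
  have TA: "Tm (Sset A) (LVar 0)" using Disj(1) by (auto simp: Tm_def)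
  have TB: "Tm (Sset B) (LVar 0)" using Disj(2) by (auto simp: Tm_def)
  from Disj(3) have "es = [] \<or> (\<exists>u v es'. es = Case u v # es' \<and> (\<forall>n.
      (\<forall>w. Tm (Sset A) w \<longrightarrow> SN (apps (subst (Ln n u) 0 w) (map (LnE n) es'))) \<and>
      (\<forall>w. Tm (Sset B) w \<longrightarrow> SN (apps (subst (Ln n v) 0 w) (map (LnE n) es')))))" by auto
  then show ?case
  proof (elim disjE exE conjE)
    assume "es = []" then show ?thesis by (auto simp: SN_LVar)
  next
    fix u v es' assume a: "es = Case u v # es'" "\<forall>n.
      (\<forall>w. Tm (Sset A) w \<longrightarrow> SN (apps (subst (Ln n u) 0 w) (map (LnE n) es'))) \<and>
      (\<forall>w. Tm (Sset B) w \<longrightarrow> SN (apps (subst (Ln n v) 0 w) (map (LnE n) es')))"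
    have "SN (apps (subst u 0 (LVar 0)) es')" "SN (apps (subst v 0 (LVar 0)) es')"
      using a(2)[rule_format, of 0] TA TB by auto
    then have "SN (apps u (map (lift_lE 0) es'))" "SN (apps v (map (lift_lE 0) es'))"
      by (auto simp: subst_apps_lift[symmetric] intro: SN_subst)
    then show ?thesis unfolding a(1) by (rule SN_var_case)
  qed
qed

lemma Tm_var: "Tm (Sset A) (LVar x)"
  by (auto simp: Tm_def var_S)

definition good :: "(nat \<Rightarrow> ty) \<Rightarrow> (nat \<Rightarrow> ty) \<Rightarrow> (nat \<Rightarrow> trm) \<Rightarrow> (nat \<Rightarrow> elim list) \<Rightarrow> bool" where
  "good \<Gamma> \<Delta> \<sigma> \<rho> = ((\<forall>i. Tm (Sset (\<Gamma> i)) (\<sigma> i)) \<and> (\<forall>a. \<rho> a \<in> Sset (\<Delta> a)))"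

lemma good_lift: "good \<Gamma> \<Delta> \<sigma> \<rho> \<Longrightarrow> good \<Gamma> (ext_ctx B \<Delta>) (\<lambda>i. lift_m 0 (\<sigma> i)) (upm \<rho>)"
  by (auto simp: good_def Tm_lift upm_def ext_ctx_def S_lift split: nat.splits)

lemma good_liftn: "good \<Gamma> \<Delta> \<sigma> \<rho> \<Longrightarrow> good \<Gamma> ((ext_ctx Bot ^^ n) \<Delta>) (\<lambda>i. Ln n (\<sigma> i)) ((upm ^^ n) \<rho>)"
proof (induct n)
  case 0 then show ?case by (simp add: Ln_def)
next
  case (Suc n)
  then show ?case using good_lift[OF Suc(1)[OF Suc(2)], of Bot] by (simp add: Ln_Suc2)
qed

lemma typing_liftn: "typing \<Gamma> t A \<Delta> \<Longrightarrow> typing \<Gamma> (Ln n t) A ((ext_ctx Bot ^^ n) \<Delta>)"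
proof (induct n)
  case 0 then show ?case by simp
next
  case (Suc n)
  then show ?case using typing_lift_m[OF Suc(1)[OF Suc(2)], of 0 Bot] by (simp add: Ln_Suc2 insd0)
qed

lemma sub_liftn: "Ln n (sub \<sigma> \<rho> t) = sub (\<lambda>i. Ln n (\<sigma> i)) ((upm ^^ n) \<rho>) (Ln n t)"
proof (induct n)
  case 0 then show ?case by simp
next
  case (Suc n)
  then show ?case by (simp add: Ln_Suc2 lift_m0_sub)
qed

lemma sz_Ln: "sz (Ln n t) = sz t"
  by (induct n) (auto simp: Ln_Suc2 sz_lift_m)

lemma Ln_lift_l: "Ln n (lift_l 0 s) = lift_l 0 (Ln n s)"
  by (induct n) (auto simp: Ln_Suc2 lift_l_lift_m)

lemma upl_Ln: "(\<lambda>i. Ln n (upl \<sigma> i)) = upl (\<lambda>i. Ln n (\<sigma> i))"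
  by (rule ext) (auto simp: upl_def Ln_lift_l split: nat.splits)

lemma upm_mapl: "upm (mapl \<rho>) = mapl (upm \<rho>)"
  by (rule ext) (auto simp: upm_def mapl_def lift_l_lift_m split: nat.splits)

lemma upmn_mapl: "(upm ^^ n) (mapl \<rho>) = mapl ((upm ^^ n) \<rho>)"
  by (induct n) (auto simp: upm_mapl)

lemma good_scons: "good \<Gamma> \<Delta> \<sigma> \<rho> \<Longrightarrow> Tm (Sset A) u \<Longrightarrow> good (ext_ctx A \<Gamma>) \<Delta> (scons u \<sigma>) \<rho>"
  by (auto simp: good_def scons_def ext_ctx_def split: nat.splits)

lemma Tm_elim: "Tm (Sset B) X \<Longrightarrow> e # es \<in> Sset B \<Longrightarrow> SN (apps (App X e) es)"
  unfolding Tm_def by (metis Ln_0 apps_Cons)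

inductive_cases typLVarE: "typing \<Gamma> (LVar x) A \<Delta>"
inductive_cases typLamE: "typing \<Gamma> (Lam s) A \<Delta>"
inductive_cases typAppE: "typing \<Gamma> (App s e) A \<Delta>"
inductive_cases typPairE: "typing \<Gamma> (Pair s u) A \<Delta>"
inductive_cases typInj1E: "typing \<Gamma> (Inj1 s) A \<Delta>"
inductive_cases typInj2E: "typing \<Gamma> (Inj2 s) A \<Delta>"
inductive_cases typMuE: "typing \<Gamma> (Mu s) A \<Delta>"
inductive_cases typMAppE: "typing \<Gamma> (MApp a s) A \<Delta>"

lemma good_mu: "good \<Gamma> \<Delta> \<sigma> \<rho> \<Longrightarrow> es \<in> Sset A \<Longrightarrow>
   good \<Gamma> (ext_ctx A \<Delta>) (\<lambda>i. lift_m 0 (\<sigma> i)) ((upm \<rho>)(0 := map (lift_mE 0) es))"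
  by (auto simp: good_def Tm_lift upm_def ext_ctx_def S_lift split: nat.splits)

lemma adeq: "typing \<Gamma> t A \<Delta> \<Longrightarrow> good \<Gamma> \<Delta> \<sigma> \<rho> \<Longrightarrow> es \<in> Sset A \<Longrightarrow> SN (apps (sub \<sigma> \<rho> t) es)"
proof (induct "sz t" arbitrary: t \<Gamma> A \<Delta> \<sigma> \<rho> es rule: less_induct)
  case less
  note IH = less(1)
  have TmIH: "Tm (Sset A') (sub \<sigma>' \<rho>' t')"
    if th: "sz t' < sz t" "typing \<Gamma>' t' A' \<Delta>'" "good \<Gamma>' \<Delta>' \<sigma>' \<rho>'" for t' \<Gamma>' A' \<Delta>' \<sigma>' \<rho>'
    unfolding Tm_def
  proof (intro allI impI)
    fix n es' assume es': "es' \<in> Sset A'"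
    have "SN (apps (sub (\<lambda>i. Ln n (\<sigma>' i)) ((upm ^^ n) \<rho>') (Ln n t')) es')"
      by (rule IH[OF _ typing_liftn[OF th(2)] good_liftn[OF th(3)] es']) (simp add: sz_Ln th(1))
    then show "SN (apps (Ln n (sub \<sigma>' \<rho>' t')) es')" by (simp add: sub_liftn)
  qed
  show ?case
  proof (cases t)
    case (LVar x)
    from less(2) have "A = \<Gamma> x" by (auto simp: LVar elim: typLVarE)
    then show ?thesis using less(3,4) LVar unfolding good_def Tm_def by (metis Ln_0 sub.simps(1))
  next
    case (Lam s)
    from less(2) obtain A1 B where A: "A = Imp A1 B" and ts: "typing (ext_ctx A1 \<Gamma>) s B \<Delta>"
      by (auto simp: Lam elim: typLamE)
    have szs: "sz s < sz t" by (simp add: Lam)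
    have subS: "SN (apps (subst (sub (upl \<sigma>) (mapl \<rho>) s) 0 u) es')" if "Tm (Sset A1) u" "es' \<in> Sset B" for u es'
      unfolding subst_sub0 by (rule IH[OF szs ts good_scons[OF less(3) that(1)] that(2)])
    from less(4) A have "es = [] \<or> (\<exists>u es'. es = ETm u # es' \<and> Tm (Sset A1) u \<and> es' \<in> Sset B)" by auto
    then show ?thesis
    proof (elim disjE exE conjE)
      assume "es = []"
      moreover have "SN (sub (upl \<sigma>) (mapl \<rho>) s)"
        using subS[OF Tm_var[of A1 0] Nil_Sset] by (auto intro: SN_subst)
      ultimately show ?thesis using Lam by (auto intro: SN_Lam)
    next
      fix u es' assume a: "es = ETm u # es'" "Tm (Sset A1) u" "es' \<in> Sset B"
      have "SN (apps (Lam (sub (upl \<sigma>) (mapl \<rho>) s)) (ETm u # es'))"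
        by (rule SN_beta[OF Tm_SN[OF a(2)] subS[OF a(2) a(3)]])
      then show ?thesis using Lam a by simp
    qed
  next
    case (App s e)
    have szs: "sz s < sz t" by (simp add: App)
    from less(2)[unfolded App] show ?thesis
    proof (rule typAppE)
      fix A' v assume 1: "e = ETm v" "typing \<Gamma> s (Imp A' A) \<Delta>" "typing \<Gamma> v A' \<Delta>"
      then have v: "e = ETm v" "typing \<Gamma> v A' \<Delta>" by auto
      have "sz v < sz t" using App v by simp
      then have Tv: "Tm (Sset A') (sub \<sigma> \<rho> v)" using TmIH v less(3) by blast
      have Ts: "Tm (Sset (Imp A' A)) (sub \<sigma> \<rho> s)" using TmIH szs 1 less(3) by blast
      show ?thesis using Tm_elim[OF Ts, of "ETm (sub \<sigma> \<rho> v)" es] Tv less(4) App v by auto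
    next
      fix B' assume 2: "e = Proj1" "typing \<Gamma> s (Conj A B') \<Delta>"
      have Ts: "Tm (Sset (Conj A B')) (sub \<sigma> \<rho> s)" using TmIH szs 2 less(3) by blast
      show ?thesis using Tm_elim[OF Ts, of Proj1 es] less(4) App 2 by auto
    next
      fix A' assume 3: "e = Proj2" "typing \<Gamma> s (Conj A' A) \<Delta>"
      have Ts: "Tm (Sset (Conj A' A)) (sub \<sigma> \<rho> s)" using TmIH szs 3 less(3) by blast
      show ?thesis using Tm_elim[OF Ts, of Proj2 es] less(4) App 3 by auto
    next
      fix A1 B1 u v assume 4: "e = Case u v" "typing \<Gamma> s (Disj A1 B1) \<Delta>"
        "typing (ext_ctx A1 \<Gamma>) u A \<Delta>" "typing (ext_ctx B1 \<Gamma>) v A \<Delta>"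
      have Ts: "Tm (Sset (Disj A1 B1)) (sub \<sigma> \<rho> s)" using TmIH szs 4 less(3) by blast
      have szu: "sz u < sz t" "sz v < sz t" using App 4 by auto
      have key: "SN (apps (subst (Ln n (sub (upl \<sigma>) (mapl \<rho>) u')) 0 w) (map (LnE n) es))"
        if "Tm (Sset A2) w" "typing (ext_ctx A2 \<Gamma>) u' A \<Delta>" "sz u' < sz t" for n w u' A2
      proof -
        have "Ln n (sub (upl \<sigma>) (mapl \<rho>) u') = sub (upl (\<lambda>i. Ln n (\<sigma> i))) (mapl ((upm ^^ n) \<rho>)) (Ln n u')"
          by (simp add: sub_liftn upl_Ln upmn_mapl)
        then have eq: "subst (Ln n (sub (upl \<sigma>) (mapl \<rho>) u')) 0 w = sub (scons w (\<lambda>i. Ln n (\<sigma> i))) ((upm ^^ n) \<rho>) (Ln n u')"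
          by (simp add: subst_sub0)
        show ?thesis unfolding eq
          by (rule IH[OF _ typing_liftn[OF that(2)] good_scons[OF good_liftn[OF less(3)] that(1)] S_Ln[OF less(4)]])
            (simp add: sz_Ln that(3))
      qed
      have "Case (sub (upl \<sigma>) (mapl \<rho>) u) (sub (upl \<sigma>) (mapl \<rho>) v) # es \<in> Sset (Disj A1 B1)"
        using key[OF _ 4(3) szu(1)] key[OF _ 4(4) szu(2)] by auto
      then show ?thesis using Tm_elim[OF Ts] App 4 by auto
    qed
  next
    case (Pair s1 s2)
    from less(2) obtain A1 B1 where A: "A = Conj A1 B1" and ts: "typing \<Gamma> s1 A1 \<Delta>" "typing \<Gamma> s2 B1 \<Delta>"
      by (auto simp: Pair elim: typPairE)
    have szs: "sz s1 < sz t" "sz s2 < sz t" by (auto simp: Pair)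
    have I1: "SN (apps (sub \<sigma> \<rho> s1) es')" if "es' \<in> Sset A1" for es' by (rule IH[OF szs(1) ts(1) less(3) that])
    have I2: "SN (apps (sub \<sigma> \<rho> s2) es')" if "es' \<in> Sset B1" for es' by (rule IH[OF szs(2) ts(2) less(3) that])
    from less(4) A have "es = [] \<or> (\<exists>es'. es = Proj1 # es' \<and> es' \<in> Sset A1) \<or> (\<exists>es'. es = Proj2 # es' \<and> es' \<in> Sset B1)" by auto
    then show ?thesis
    proof (elim disjE exE conjE)
      assume "es = []" then show ?thesis using Pair I1[OF Nil_Sset] I2[OF Nil_Sset] by (auto intro: SN_Pair)
    next
      fix es' assume "es = Proj1 # es'" "es' \<in> Sset A1"
      then show ?thesis using Pair I1 I2[OF Nil_Sset] by (auto intro: SN_proj1)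
    next
      fix es' assume "es = Proj2 # es'" "es' \<in> Sset B1"
      then show ?thesis using Pair I1[OF Nil_Sset] I2 by (auto intro: SN_proj2)
    qed
  next
    case (Inj1 s)
    from less(2) obtain A1 B1 where A: "A = Disj A1 B1" and ts: "typing \<Gamma> s A1 \<Delta>"
      by (auto simp: Inj1 elim: typInj1E)
    have szs: "sz s < sz t" by (auto simp: Inj1)
    have Tw: "Tm (Sset A1) (sub \<sigma> \<rho> s)" using TmIH[OF szs ts less(3)] .
    from less(4) A have "es = [] \<or> (\<exists>u v es'. es = Case u v # es' \<and> (\<forall>n.
      (\<forall>w. Tm (Sset A1) w \<longrightarrow> SN (apps (subst (Ln n u) 0 w) (map (LnE n) es'))) \<and>
      (\<forall>w. Tm (Sset B1) w \<longrightarrow> SN (apps (subst (Ln n v) 0 w) (map (LnE n) es')))))" by auto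
    then show ?thesis
    proof (elim disjE exE conjE)
      assume "es = []" then show ?thesis using Inj1 Tm_SN[OF Tw] by (auto intro: SN_Inj1)
    next
      fix u v es' assume a: "es = Case u v # es'" "\<forall>n.
        (\<forall>w. Tm (Sset A1) w \<longrightarrow> SN (apps (subst (Ln n u) 0 w) (map (LnE n) es'))) \<and>
        (\<forall>w. Tm (Sset B1) w \<longrightarrow> SN (apps (subst (Ln n v) 0 w) (map (LnE n) es')))"
      have c1: "SN (apps (subst u 0 (sub \<sigma> \<rho> s)) es')" using a(2)[rule_format, of 0] Tw by auto
      have "SN (apps (subst v 0 (LVar 0)) es')" using a(2)[rule_format, of 0] Tm_var by auto
      then have c2: "SN (apps v (map (lift_lE 0) es'))" by (auto simp: subst_apps_lift[symmetric] intro: SN_subst)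
      show ?thesis using SN_inj1[OF Tm_SN[OF Tw] c1 c2] Inj1 a by simp
    qed
  next
    case (Inj2 s)
    from less(2) obtain A1 B1 where A: "A = Disj A1 B1" and ts: "typing \<Gamma> s B1 \<Delta>"
      by (auto simp: Inj2 elim: typInj2E)
    have szs: "sz s < sz t" by (auto simp: Inj2)
    have Tw: "Tm (Sset B1) (sub \<sigma> \<rho> s)" using TmIH[OF szs ts less(3)] .
    from less(4) A have "es = [] \<or> (\<exists>u v es'. es = Case u v # es' \<and> (\<forall>n.
      (\<forall>w. Tm (Sset A1) w \<longrightarrow> SN (apps (subst (Ln n u) 0 w) (map (LnE n) es'))) \<and>
      (\<forall>w. Tm (Sset B1) w \<longrightarrow> SN (apps (subst (Ln n v) 0 w) (map (LnE n) es')))))" by auto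
    then show ?thesis
    proof (elim disjE exE conjE)
      assume "es = []" then show ?thesis using Inj2 Tm_SN[OF Tw] by (auto intro: SN_Inj2)
    next
      fix u v es' assume a: "es = Case u v # es'" "\<forall>n.
        (\<forall>w. Tm (Sset A1) w \<longrightarrow> SN (apps (subst (Ln n u) 0 w) (map (LnE n) es'))) \<and>
        (\<forall>w. Tm (Sset B1) w \<longrightarrow> SN (apps (subst (Ln n v) 0 w) (map (LnE n) es')))"
      have c1: "SN (apps (subst v 0 (sub \<sigma> \<rho> s)) es')" using a(2)[rule_format, of 0] Tw by auto
      have "SN (apps (subst u 0 (LVar 0)) es')" using a(2)[rule_format, of 0] Tm_var by auto
      then have c2: "SN (apps u (map (lift_lE 0) es'))" by (auto simp: subst_apps_lift[symmetric] intro: SN_subst)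
      show ?thesis using SN_inj2[OF Tm_SN[OF Tw] c1 c2] Inj2 a by simp
    qed
  next
    case (Mu s)
    from less(2) have ts: "typing \<Gamma> s Bot (ext_ctx A \<Delta>)" by (auto simp: Mu elim: typMuE)
    have szs: "sz s < sz t" by (auto simp: Mu)
    have "SN (apps (sub (\<lambda>i. lift_m 0 (\<sigma> i)) ((upm \<rho>)(0 := map (lift_mE 0) es)) s) [])"
      by (rule IH[OF szs ts good_mu[OF less(3) less(4)] Nil_Sset])
    then have "SN (Ms (sub (\<lambda>i. lift_m 0 (\<sigma> i)) (upm \<rho>) s) es)" by (simp add: Ms_sub_upm)
    then show ?thesis using Mu SN_mu var_S[OF less(4)] by simp
  next
    case (MApp a s)
    from less(2) have A: "A = Bot" and ts: "typing \<Gamma> s (\<Delta> a) \<Delta>" by (auto simp: MApp elim: typMAppE)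
    have szs: "sz s < sz t" by (auto simp: MApp)
    have "\<rho> a \<in> Sset (\<Delta> a)" using less(3) by (simp add: good_def)
    then have "SN (apps (sub \<sigma> \<rho> s) (\<rho> a))" by (rule IH[OF szs ts less(3)])
    moreover have "es = []" using less(4) A by simp
    ultimately show ?thesis using MApp by (auto intro: SN_MApp)
  qed
qed

theorem SN_typed: "typing \<Gamma> t A \<Delta> \<Longrightarrow> SN t"
proof -
  assume "typing \<Gamma> t A \<Delta>"
  moreover have "good \<Gamma> \<Delta> LVar (\<lambda>_. [])" by (simp add: good_def Tm_var)
  ultimately have "SN (apps (sub LVar (\<lambda>_. []) t) [])" using adeq Nil_Sset by blast
  then show ?thesis by (simp add: sub_id)
qed

lemma SN_no_chain: "SN t \<Longrightarrow> \<not> (\<exists>f :: nat \<Rightarrow> trm. f 0 = t \<and> (\<forall>i. red (f i) (f (Suc i))))"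
proof (induct rule: SN.induct)
  case (SNI x)
  show ?case
  proof
    assume "\<exists>f. f 0 = x \<and> (\<forall>i. red (f i) (f (Suc i)))"
    then obtain f where f: "f 0 = x" "\<forall>i. red (f i) (f (Suc i))" by blast
    then have "red x (f 1)" by (metis One_nat_def)
    moreover have "\<exists>g. g 0 = f 1 \<and> (\<forall>i. red (g i) (g (Suc i)))"
      by (rule exI[of _ "\<lambda>i. f (Suc i)"]) (use f in simp)
    ultimately show False using SNI(2) by blast
  qed
qed

theorem theorem3:
  assumes "typing \<Gamma> t A \<Delta>"
  shows "\<not> (\<exists>f :: nat \<Rightarrow> trm. f 0 = t \<and> (\<forall>i. red (f i) (f (Suc i))))"
  using SN_no_chain[OF SN_typed[OF assms]] .

end
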